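(* Suppose $T\in L_{aut}(\mathcal B)$ has the shadowing property. Then the following are equivalent: (1) $T$ is uniformly expansive; (2) $T$ is expansive; (3) $T$ has the unique shadowing property; (4) $T$ is hyperbolic.
   Context: $\mathcal B$ is a Banach space, $S_{\mathcal B}$ its unit sphere. A sequence $(x_n)_{n\in\mathbb Z}$ is a $\delta$-pseudo-orbit if $|x_{n+1}-Tx_n|<\delta$ for all $n$; $y$ $\varepsilon$-shadows it if $|x_n-T^ny|<\varepsilon$ for all $n$. Shadowing property: for every $\varepsilon>0$ there is $\delta>0$ such that every $\delta$-pseudo-orbit is $\varepsilon$-shadowed by some point. Unique shadowing property: there exist $\varepsilon_0,\delta_0>0$ such that for every $0<\varepsilon\le\varepsilon_0$ there is $0<\delta\le\delta_0$ such that every $\delta$-pseudo-orbit is $\varepsilon$-shadowed by exactly one point. $T$ is expansive if there is $c>0$ such that $|T^nx-T^ny|\le c$ for all $n\in\mathbb Z$ implies $x=y$. $T$ is uniformly expansive if there is $n>0$ such that for every $x\in S_{\mathcal B}$ either $|T^nx|\ge2$ or $|T^{-n}x|\ge2$. $T$ is hyperbolic if its spectrum does not meet the unit circle. *)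

theory Defs
  imports "HOL-Analysis.Analysis"
begin

definition L_aut :: "('a::banach \<Rightarrow> 'a) set" where
  "L_aut = {T. bounded_linear T \<and> bij T}"

definition iter_int :: "('a \<Rightarrow> 'a) \<Rightarrow> int \<Rightarrow> 'a \<Rightarrow> 'a" where
  "iter_int T n = (if 0 \<le> n then T ^^ nat n else (inv T) ^^ nat (- n))"

definition pseudo_orbit :: "('a::real_normed_vector \<Rightarrow> 'a) \<Rightarrow> real \<Rightarrow> (int \<Rightarrow> 'a) \<Rightarrow> bool" where
  "pseudo_orbit T \<delta> xs \<longleftrightarrow> (\<forall>n. norm (xs (n + 1) - T (xs n)) < \<delta>)"

definition shadows :: "('a::real_normed_vector \<Rightarrow> 'a) \<Rightarrow> real \<Rightarrow> 'a \<Rightarrow> (int \<Rightarrow> 'a) \<Rightarrow> bool" where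
  "shadows T \<epsilon> y xs \<longleftrightarrow> (\<forall>n. norm (xs n - iter_int T n y) < \<epsilon>)"

definition shadowing_property :: "('a::real_normed_vector \<Rightarrow> 'a) \<Rightarrow> bool" where
  "shadowing_property T \<longleftrightarrow>
     (\<forall>\<epsilon>>0. \<exists>\<delta>>0. \<forall>xs. pseudo_orbit T \<delta> xs \<longrightarrow> (\<exists>y. shadows T \<epsilon> y xs))"

definition unique_shadowing_property :: "('a::real_normed_vector \<Rightarrow> 'a) \<Rightarrow> bool" where
  "unique_shadowing_property T \<longleftrightarrow>
     (\<exists>\<epsilon>0>0. \<exists>\<delta>0>0. \<forall>\<epsilon>. 0 < \<epsilon> \<and> \<epsilon> \<le> \<epsilon>0 \<longrightarrow>
        (\<exists>\<delta>. 0 < \<delta> \<and> \<delta> \<le> \<delta>0 \<and>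
           (\<forall>xs. pseudo_orbit T \<delta> xs \<longrightarrow> (\<exists>!y. shadows T \<epsilon> y xs))))"

definition expansive :: "('a::real_normed_vector \<Rightarrow> 'a) \<Rightarrow> bool" where
  "expansive T \<longleftrightarrow>
     (\<exists>c>0. \<forall>x y. (\<forall>n. norm (iter_int T n x - iter_int T n y) \<le> c) \<longrightarrow> x = y)"

definition uniformly_expansive :: "('a::real_normed_vector \<Rightarrow> 'a) \<Rightarrow> bool" where
  "uniformly_expansive T \<longleftrightarrow>
     (\<exists>n::nat. n > 0 \<and> (\<forall>x. norm x = 1 \<longrightarrow>
        norm (iter_int T (int n) x) \<ge> 2 \<or> norm (iter_int T (- int n) x) \<ge> 2))"

text \<open>Complexification: the operator \<open>T_C - \<lambda> I\<close> on \<open>'a \<times> 'a\<close> (pairs \<open>x + i y\<close>),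
  for \<open>\<lambda> = a + i b\<close>.\<close>
definition complexified_shift :: "('a::real_normed_vector \<Rightarrow> 'a) \<Rightarrow> complex \<Rightarrow> 'a \<times> 'a \<Rightarrow> 'a \<times> 'a" where
  "complexified_shift T z = (\<lambda>(x, y).
     (T x - (Re z *\<^sub>R x - Im z *\<^sub>R y), T y - (Im z *\<^sub>R x + Re z *\<^sub>R y)))"

definition spectrum :: "('a::real_normed_vector \<Rightarrow> 'a) \<Rightarrow> complex set" where
  "spectrum T = {z. \<not> (\<exists>S. bounded_linear S \<and> S \<circ> complexified_shift T z = id
                                 \<and> complexified_shift T z \<circ> S = id)}"

definition hyperbolic :: "('a::real_normed_vector \<Rightarrow> 'a) \<Rightarrow> bool" where
  "hyperbolic T \<longleftrightarrow> spectrum T \<inter> {z. cmod z = 1} = {}"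

end

theory Submission
  imports Defs
begin

locale autop =
  fixes T :: "'a::banach \<Rightarrow> 'a"
  assumes TL: "T \<in> L_aut"
begin

lemma T_bl: "bounded_linear T" and T_bij: "bij T"
  using TL by (auto simp: L_aut_def)

lemma T_lin: "linear T" using T_bl bounded_linear.linear by blast

lemma inv_T_lin: "linear (inv T)"
proof -
  have inj: "inj T" using T_bij bij_is_inj by auto
  have a: "T (inv T x) = x" for x by (meson T_bij bij_inv_eq_iff)
  have b: "inv T (T x) = x" for x using inj by simp
  show ?thesis
  proof (rule linearI)
    fix x y
    have "inv T (x + y) = inv T (T (inv T x) + T (inv T y))" by (simp add: a)
    also have "\<dots> = inv T (T (inv T x + inv T y))" by (simp add: linear_add[OF T_lin])
    finally show "inv T (x + y) = inv T x + inv T y" by (simp add: b)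
  next
    fix r x
    have "inv T (r *\<^sub>R x) = inv T (r *\<^sub>R T (inv T x))" by (simp add: a)
    also have "\<dots> = inv T (T (r *\<^sub>R inv T x))" by (simp add: linear_scale[OF T_lin])
    finally show "inv T (r *\<^sub>R x) = r *\<^sub>R inv T x" by (simp add: b)
  qed
qed

lemma T_inv_T: "T (inv T x) = x" by (meson T_bij bij_inv_eq_iff)
lemma inv_T_T: "inv T (T x) = x" using inv_f_f[OF bij_is_inj[OF T_bij]] .

lemma iter_succ: "iter_int T (k + 1) x = T (iter_int T k x)"
proof (cases "k \<ge> 0")
  case True
  then have "nat (k+1) = Suc (nat k)" by simp
  then show ?thesis using True by (simp add: iter_int_def)
next
  case False
  show ?thesis
  proof (cases "k = -1")
    case True then show ?thesis by (simp add: iter_int_def T_inv_T)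
  next
    case False2: False
    with False have "nat (-k) = Suc (nat (-(k+1)))" by simp
    then show ?thesis using False False2 by (simp add: iter_int_def T_inv_T)
  qed
qed

lemma iter_pred: "iter_int T (k - 1) x = inv T (iter_int T k x)"
  using iter_succ[of "k - 1" x] by (simp add: inv_T_T)

lemma iter_zero[simp]: "iter_int T 0 x = x" by (simp add: iter_int_def)

lemma iter_add: "iter_int T (a + b) x = iter_int T a (iter_int T b x)"
proof (induction a rule: int_induct[where k=0])
  case base then show ?case by simp
next
  case (step1 i)
  have "iter_int T (i + 1 + b) x = T (iter_int T (i + b) x)"
    using iter_succ[of "i+b" x] by (simp add: add_ac)
  then show ?case using step1 iter_succ by simp
next
  case (step2 i)
  have "iter_int T (i - 1 + b) x = inv T (iter_int T (i + b) x)"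
    using iter_pred[of "i+b" x] by (simp add: algebra_simps)
  then show ?case using step2 iter_pred by simp
qed

lemma iter_lin: "linear (iter_int T k)"
proof (induction k rule: int_induct[where k=0])
  case base
  have "iter_int T 0 = id" by (auto simp: iter_int_def)
  then show ?case by (simp add: linear_ident)
next
  case (step1 i)
  have e: "iter_int T (i+1) = T \<circ> iter_int T i" using iter_succ by auto
  show ?case unfolding e using linear_compose[OF step1.IH T_lin] .
next
  case (step2 i)
  have e: "iter_int T (i-1) = inv T \<circ> iter_int T i" using iter_pred by auto
  show ?case unfolding e using linear_compose[OF step2.IH inv_T_lin] .
qed

lemma iter_diff: "iter_int T k (x - y) = iter_int T k x - iter_int T k y"
  using linear_diff[OF iter_lin] by blast
lemma iter_scale: "iter_int T k (r *\<^sub>R x) = r *\<^sub>R iter_int T k x"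
  using linear_scale[OF iter_lin] by blast
lemma iter_0[simp]: "iter_int T k 0 = 0"
  using linear_0[OF iter_lin] by blast
lemma iter_neg_cancel: "iter_int T (-k) (iter_int T k x) = x"
  using iter_add[of "-k" k x] by simp

end

context autop begin

definition NB where "NB \<longleftrightarrow> (\<forall>z. (\<exists>B. \<forall>n. norm (iter_int T n z) \<le> B) \<longrightarrow> z = 0)"

lemma exp_NB: "expansive T \<longleftrightarrow> NB"
proof
  assume "expansive T"
  then obtain c where c: "c>0" "\<forall>x y. (\<forall>n. norm (iter_int T n x - iter_int T n y) \<le> c) \<longrightarrow> x = y"
    by (auto simp: expansive_def)
  show NB unfolding NB_def
  proof (intro allI impI)
    fix z assume "\<exists>B. \<forall>n. norm (iter_int T n z) \<le> B"
    then obtain B where B: "\<forall>n. norm (iter_int T n z) \<le> B" by auto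
    have B0: "B \<ge> 0" using B[rule_format, of 0] norm_ge_zero order_trans by metis
    define s where "s = c / (B+1)"
    have s: "s > 0" using c B0 by (simp add: s_def)
    have "\<forall>n. norm (iter_int T n (s *\<^sub>R z) - iter_int T n 0) \<le> c"
    proof
      fix n
      have "norm (iter_int T n (s *\<^sub>R z) - iter_int T n 0) = s * norm (iter_int T n z)"
        using s by (simp add: iter_scale)
      also have "\<dots> \<le> s * B" using B s by (simp add: mult_left_mono)
      also have "\<dots> \<le> c" unfolding s_def using c B0 by (simp add: field_simps)
      finally show "norm (iter_int T n (s *\<^sub>R z) - iter_int T n 0) \<le> c" .
    qed
    then have "s *\<^sub>R z = 0" using c(2) by blast
    then show "z = 0" using s by simp
  qed
next
  assume NB
  show "expansive T" unfolding expansive_def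
  proof (intro exI[of _ 1] conjI allI impI)
    fix x y assume h: "\<forall>n. norm (iter_int T n x - iter_int T n y) \<le> 1"
    then have "\<forall>n. norm (iter_int T n (x - y)) \<le> 1" by (simp add: iter_diff)
    then have "x - y = 0" using \<open>NB\<close> unfolding NB_def by blast
    then show "x = y" by simp
  qed simp
qed

lemma US_imp_E: "unique_shadowing_property T \<Longrightarrow> expansive T"
proof -
  assume "unique_shadowing_property T"
  then obtain e0 d0 where e0: "e0>0" and H: "\<forall>e. 0<e \<and> e \<le> e0 \<longrightarrow> (\<exists>d. 0<d \<and> d \<le> d0 \<and> (\<forall>xs. pseudo_orbit T d xs \<longrightarrow> (\<exists>!y. shadows T e y xs)))"
    unfolding unique_shadowing_property_def by blast
  then obtain d where d: "d>0" and U: "\<forall>xs. pseudo_orbit T d xs \<longrightarrow> (\<exists>!y. shadows T e0 y xs)"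
    using e0 by auto
  have po: "pseudo_orbit T d (\<lambda>_. 0)" using d linear_0[OF T_lin] by (simp add: pseudo_orbit_def)
  show "expansive T" unfolding expansive_def
  proof (intro exI[of _ "e0/2"] conjI allI impI)
    show "e0/2 > 0" using e0 by simp
    fix x y assume h: "\<forall>n. norm (iter_int T n x - iter_int T n y) \<le> e0/2"
    have s1: "shadows T e0 0 (\<lambda>_. 0)" using e0 by (simp add: shadows_def)
    have s2: "shadows T e0 (x - y) (\<lambda>_. 0)" unfolding shadows_def
    proof
      fix n have "norm (0 - iter_int T n (x-y)) = norm (iter_int T n x - iter_int T n y)"
        by (simp add: iter_diff norm_minus_commute)
      also have "\<dots> \<le> e0/2" using h by blast
      finally show "norm (0 - iter_int T n (x - y)) < e0" using e0 by simp
    qed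
    have "x - y = 0" using U po s1 s2 by blast
    then show "x = y" by simp
  qed
qed

lemma E_imp_US:
  assumes E: "expansive T" and Sh: "shadowing_property T"
  shows "unique_shadowing_property T"
proof -
  obtain c where c: "c>0" and cE: "\<forall>x y. (\<forall>n. norm (iter_int T n x - iter_int T n y) \<le> c) \<longrightarrow> x = y"
    using E unfolding expansive_def by blast
  have main: "\<forall>e. 0 < e \<and> e \<le> c/2 \<longrightarrow> (\<exists>d. 0<d \<and> d \<le> 1 \<and> (\<forall>xs. pseudo_orbit T d xs \<longrightarrow> (\<exists>!y. shadows T e y xs)))"
  proof (intro allI impI)
    fix e assume e: "0 < e \<and> e \<le> c/2"
    obtain d' where d': "d'>0" "\<forall>xs. pseudo_orbit T d' xs \<longrightarrow> (\<exists>y. shadows T e y xs)"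
      using Sh e unfolding shadowing_property_def by blast
    show "\<exists>d. 0<d \<and> d \<le> 1 \<and> (\<forall>xs. pseudo_orbit T d xs \<longrightarrow> (\<exists>!y. shadows T e y xs))"
    proof (intro exI[of _ "min d' 1"] conjI allI impI)
      show "0 < min d' 1" using d' by simp
      show "min d' 1 \<le> 1" by simp
      fix xs assume po: "pseudo_orbit T (min d' 1) xs"
      then have "pseudo_orbit T d' xs" unfolding pseudo_orbit_def by auto
      then obtain y where y: "shadows T e y xs" using d' by blast
      show "\<exists>!y. shadows T e y xs"
      proof (rule ex1I[of _ y])
        show "shadows T e y xs" by (rule y)
        fix y' assume y': "shadows T e y' xs"
        have "\<forall>n. norm (iter_int T n y' - iter_int T n y) \<le> c"
        proof
          fix n
          have eq: "iter_int T n y' - iter_int T n y = (xs n - iter_int T n y) - (xs n - iter_int T n y')"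
            by simp
          have "norm (iter_int T n y' - iter_int T n y) \<le> norm (xs n - iter_int T n y) + norm (xs n - iter_int T n y')"
            unfolding eq by (rule norm_triangle_ineq4)
          also have "\<dots> < e + e" using y y' unfolding shadows_def by (meson add_strict_mono)
          finally show "norm (iter_int T n y' - iter_int T n y) \<le> c" using e by simp
        qed
        then show "y' = y" using cE by blast
      qed
    qed
  qed
  show ?thesis unfolding unique_shadowing_property_def
    using c main by (intro exI[of _ "c/2"] conjI exI[of _ "1::real"]) auto
qed

lemma grow:
  assumes D: "\<forall>v. norm v = 1 \<longrightarrow> 2 \<le> norm (iter_int T s v) \<or> 2 \<le> norm (iter_int T (-s) v)"
    and y1: "norm y = 1" and y2: "2 \<le> norm (iter_int T s y)"
  shows "2^(Suc m) \<le> norm (iter_int T (int (Suc m) * s) y) \<and>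
         norm (iter_int T (int m * s) y) * 2 \<le> norm (iter_int T (int (Suc m) * s) y)"
proof (induction m)
  case 0
  then show ?case using y1 y2 by simp
next
  case (Suc m)
  define a where "a = iter_int T (int (Suc m) * s) y"
  have a2: "2^(Suc m) \<le> norm a" and aprev: "norm (iter_int T (int m * s) y) * 2 \<le> norm a"
    using Suc unfolding a_def by auto
  have apos: "norm a > 0" using a2 by (smt (verit) zero_less_power)
  define v where "v = (1 / norm a) *\<^sub>R a"
  have v1: "norm v = 1" using apos by (simp add: v_def)
  have n1: "iter_int T s v = (1 / norm a) *\<^sub>R iter_int T (int (Suc (Suc m)) * s) y"
    unfolding v_def a_def iter_scale iter_add[symmetric] by (simp add: algebra_simps)
  have n2: "iter_int T (-s) v = (1 / norm a) *\<^sub>R iter_int T (int m * s) y"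
    unfolding v_def a_def iter_scale iter_add[symmetric] by (simp add: algebra_simps)
  have "\<not> 2 \<le> norm (iter_int T (-s) v)"
  proof
    assume "2 \<le> norm (iter_int T (-s) v)"
    then have "2 \<le> norm (iter_int T (int m * s) y) / norm a" unfolding n2 using apos by simp
    then have "2 * norm a \<le> norm (iter_int T (int m * s) y)" using apos by (simp add: field_simps)
    then show False using aprev apos by linarith
  qed
  then have "2 \<le> norm (iter_int T s v)" using D v1 by blast
  then have "2 \<le> norm (iter_int T (int (Suc (Suc m)) * s) y) / norm a" unfolding n1 using apos by simp
  then have h: "2 * norm a \<le> norm (iter_int T (int (Suc (Suc m)) * s) y)" using apos by (simp add: field_simps)
  then show ?case using a2 unfolding a_def by (auto simp: mult.commute)
qed

lemma UE_imp_NB: "uniformly_expansive T \<Longrightarrow> NB"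
proof -
  assume "uniformly_expansive T"
  then obtain n::nat where n: "\<forall>x. norm x = 1 \<longrightarrow> norm (iter_int T (int n) x) \<ge> 2 \<or> norm (iter_int T (- int n) x) \<ge> 2"
    unfolding uniformly_expansive_def by blast
  show NB unfolding NB_def
  proof (intro allI impI, rule ccontr)
    fix z assume "\<exists>B. \<forall>k. norm (iter_int T k z) \<le> B" and z: "z \<noteq> 0"
    then obtain B where B: "\<forall>k. norm (iter_int T k z) \<le> B" by auto
    define y where "y = (1 / norm z) *\<^sub>R z"
    have y1: "norm y = 1" using z by (simp add: y_def)
    have yB: "norm (iter_int T k y) \<le> B / norm z" for k
      using B z by (simp add: y_def iter_scale divide_right_mono)
    obtain s where D: "\<forall>v. norm v = 1 \<longrightarrow> 2 \<le> norm (iter_int T s v) \<or> 2 \<le> norm (iter_int T (-s) v)"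
      and y2: "2 \<le> norm (iter_int T s y)"
    proof (cases "2 \<le> norm (iter_int T (int n) y)")
      case True
      then show ?thesis using that[of "int n"] n by auto
    next
      case False
      then have "2 \<le> norm (iter_int T (- int n) y)" using n y1 by blast
      then show ?thesis using that[of "- int n"] n by auto
    qed
    obtain m where m: "B / norm z < 2 ^ m" using real_arch_pow[of 2 "B / norm z"] by auto
    have "(2::real) ^ m \<le> 2 ^ Suc m" by simp
    also have "\<dots> \<le> norm (iter_int T (int (Suc m) * s) y)" using grow[OF D y1 y2, of m] by blast
    also have "\<dots> \<le> B / norm z" by (rule yB)
    finally show False using m by simp
  qed
qed

end

fun fwd :: "('a::real_normed_vector \<Rightarrow> 'a) \<Rightarrow> (int \<Rightarrow> 'a) \<Rightarrow> nat \<Rightarrow> 'a" where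
  "fwd T w 0 = 0"
| "fwd T w (Suc n) = T (fwd T w n) + w (int n)"

fun bwd :: "('a::real_normed_vector \<Rightarrow> 'a) \<Rightarrow> (int \<Rightarrow> 'a) \<Rightarrow> nat \<Rightarrow> 'a" where
  "bwd T w 0 = 0"
| "bwd T w (Suc n) = inv T (bwd T w n - w (- int (Suc n)))"

definition seqw :: "('a::real_normed_vector \<Rightarrow> 'a) \<Rightarrow> (int \<Rightarrow> 'a) \<Rightarrow> int \<Rightarrow> 'a" where
  "seqw T w k = (if 0 \<le> k then fwd T w (nat k) else bwd T w (nat (-k)))"

lemma phi_lip:
  fixes a b N :: real assumes N: "N > 0"
  shows "\<bar>max 0 (1 - \<bar>a\<bar>/N) - max 0 (1 - \<bar>b\<bar>/N)\<bar> \<le> \<bar>a - b\<bar>/N"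
proof -
  have "\<bar>\<bar>a\<bar>/N - \<bar>b\<bar>/N\<bar> \<le> \<bar>a - b\<bar>/N"
    using N by (simp add: diff_divide_distrib[symmetric] abs_triangle_ineq3 divide_right_mono)
  then show ?thesis by linarith
qed

context autop begin

lemma seqw_step: "seqw T w (k+1) - T (seqw T w k) = w k"
proof (cases "0 \<le> k")
  case True
  then have "nat (k+1) = Suc (nat k)" by simp
  then show ?thesis using True by (simp add: seqw_def)
next
  case False
  have e1: "seqw T w (k+1) = bwd T w (nat (-(k+1)))"
    using False by (cases "k = -1") (auto simp: seqw_def)
  have "nat (-k) = Suc (nat (-(k+1)))" using False by simp
  then have e2: "seqw T w k = inv T (bwd T w (nat (-(k+1))) - w k)"
    using False by (simp add: seqw_def)
  show ?thesis unfolding e1 e2 T_inv_T by simp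
qed

lemma Sh_LB1:
  fixes u :: "int \<Rightarrow> 'a"
  assumes NB and d: "d > 0" and dS: "\<forall>xs. pseudo_orbit T d xs \<longrightarrow> (\<exists>y. shadows T 1 y xs)"
    and B: "\<forall>k. norm (u k) \<le> B" and eta: "\<eta> > 0" and L: "\<forall>k. norm (u (k+1) - T (u k)) \<le> \<eta>"
  shows "norm (u k) \<le> 2 / d * \<eta>"
proof -
    define s where "s = d / (2 * \<eta>)"
    have s: "s > 0" using d eta by (simp add: s_def)
    define v where "v = (\<lambda>k. s *\<^sub>R u k)"
    have "pseudo_orbit T d v" unfolding pseudo_orbit_def
    proof
      fix k
      have "v (k+1) - T (v k) = s *\<^sub>R (u (k+1) - T (u k))"
        by (simp add: v_def linear_scale[OF T_lin] scaleR_diff_right)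
      then have "norm (v (k+1) - T (v k)) = s * norm (u (k+1) - T (u k))" using s by simp
      also have "\<dots> \<le> s * \<eta>" using L s by (simp add: mult_left_mono)
      also have "\<dots> = d / 2" using eta by (simp add: s_def)
      also have "\<dots> < d" using d by simp
      finally show "norm (v (k + 1) - T (v k)) < d" .
    qed
    then obtain y where y: "shadows T 1 y v" using dS by blast
    have "\<forall>n. norm (iter_int T n y) \<le> s * B + 1"
    proof
      fix n
      have "norm (iter_int T n y) \<le> norm (v n) + norm (v n - iter_int T n y)"
        using norm_triangle_sub[of "iter_int T n y" "v n"] by (simp add: norm_minus_commute)
      also have "\<dots> \<le> s * B + 1" using y B s unfolding shadows_def v_def
        by (simp add: add_mono less_imp_le mult_left_mono)
      finally show "norm (iter_int T n y) \<le> s * B + 1" .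
    qed
    then have "y = 0" using \<open>NB\<close> unfolding NB_def by blast
    then have "norm (v k) < 1" using y unfolding shadows_def by auto
    then have "s * norm (u k) < 1" using s by (simp add: v_def)
    then have "norm (u k) < 1 / s" using s by (simp add: field_simps)
    also have "1 / s = 2 / d * \<eta>" unfolding s_def using d eta by simp
    finally show ?thesis by simp
qed

lemma Sh_LB:
  assumes NB and Sh: "shadowing_property T"
  shows "\<exists>C>0. \<forall>(u::int\<Rightarrow>'a) \<eta>. (\<exists>B. \<forall>k. norm (u k) \<le> B) \<longrightarrow> \<eta> > 0 \<longrightarrow>
           (\<forall>k. norm (u (k+1) - T (u k)) \<le> \<eta>) \<longrightarrow> (\<forall>k. norm (u k) \<le> C * \<eta>)"
proof -
  obtain d where d: "d > 0" and dS: "\<forall>xs. pseudo_orbit T d xs \<longrightarrow> (\<exists>y. shadows T 1 y xs)"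
    using Sh unfolding shadowing_property_def by (meson zero_less_one)
  have "2/d > 0" using d by simp
  moreover have "\<forall>(u::int\<Rightarrow>'a) \<eta>. (\<exists>B. \<forall>k. norm (u k) \<le> B) \<longrightarrow> \<eta> > 0 \<longrightarrow>
           (\<forall>k. norm (u (k+1) - T (u k)) \<le> \<eta>) \<longrightarrow> (\<forall>k. norm (u k) \<le> 2/d * \<eta>)"
    using Sh_LB1[OF \<open>NB\<close> d dS] by blast
  ultimately show ?thesis by blast
qed

lemma LB_zero:
  assumes C: "C > 0" and H: "\<forall>\<eta>>0. a \<le> C * (\<eta>::real)"
  shows "a \<le> 0"
proof (rule ccontr)
  assume "\<not> a \<le> 0"
  then have "a / (2*C) > 0" using C by simp
  then have "a \<le> C * (a / (2*C))" using H by blast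
  then show False using C \<open>\<not> a \<le> 0\<close> by (simp add: field_simps)
qed

lemma Sh_EX:
  fixes w :: "int \<Rightarrow> 'a"
  assumes Sh: "shadowing_property T" and W: "\<forall>k. norm (w k) \<le> W"
  shows "\<exists>u. (\<exists>B. \<forall>k. norm (u k) \<le> B) \<and> (\<forall>k. u (k+1) - T (u k) = w k)"
proof -
  obtain d where d: "d > 0" and dS: "\<forall>xs. pseudo_orbit T d xs \<longrightarrow> (\<exists>y. shadows T 1 y xs)"
    using Sh unfolding shadowing_property_def by (meson zero_less_one)
  have W0: "W \<ge> 0" using W[rule_format, of 0] norm_ge_zero order_trans by metis
  define s where "s = d / (2 * (W + 1))"
  have s: "s > 0" using d W0 by (simp add: s_def)
  define w' where "w' = (\<lambda>k. s *\<^sub>R w k)"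
  define x where "x = seqw T w'"
  have "pseudo_orbit T d x" unfolding pseudo_orbit_def
  proof
    fix k
    have "norm (x (k+1) - T (x k)) = s * norm (w k)" unfolding x_def seqw_step w'_def using s by simp
    also have "\<dots> \<le> s * W" using W s by (simp add: mult_left_mono)
    also have "\<dots> < d" unfolding s_def using d W0 by (simp add: field_simps add_nonneg_pos)
    finally show "norm (x (k + 1) - T (x k)) < d" .
  qed
  then obtain y where y: "shadows T 1 y x" using dS by blast
  define u where "u = (\<lambda>k. (1/s) *\<^sub>R (x k - iter_int T k y))"
  show ?thesis
  proof (intro exI[of _ u] conjI allI exI[of _ "1/s"])
    fix k
    show "norm (u k) \<le> 1 / s" using y s unfolding u_def shadows_def
      by (simp add: less_imp_le divide_right_mono)
    have "u (k+1) - T (u k) = (1/s) *\<^sub>R ((x (k+1) - T (x k)) - (iter_int T (k+1) y - T (iter_int T k y)))"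
      unfolding u_def by (simp add: linear_scale[OF T_lin] linear_diff[OF T_lin] algebra_simps)
    also have "\<dots> = w k" unfolding iter_succ x_def seqw_step w'_def using s by simp
    finally show "u (k+1) - T (u k) = w k" .
  qed
qed

end

context autop begin

lemma NB_Sh_UE:
  assumes "NB" and Sh: "shadowing_property T"
  shows "uniformly_expansive T"
proof -
  obtain C where C: "C>0" and LB: "\<forall>(u::int\<Rightarrow>'a) \<eta>. (\<exists>B. \<forall>k. norm (u k) \<le> B) \<longrightarrow> \<eta> > 0 \<longrightarrow>
           (\<forall>k. norm (u (k+1) - T (u k)) \<le> \<eta>) \<longrightarrow> (\<forall>k. norm (u k) \<le> C * \<eta>)"
    using Sh_LB[OF assms] by blast
  define C1 where "C1 = max C 1"
  have C1: "C1 \<ge> 1" by (simp add: C1_def)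
  have LB1: "norm (u k) \<le> C1 * \<eta>" if "\<exists>B. \<forall>k. norm (u k) \<le> B" "\<eta> > 0"
     "\<forall>k. norm (u (k+1) - T (u k)) \<le> \<eta>" for u :: "int \<Rightarrow> 'a" and \<eta> k
  proof -
    have "norm (u k) \<le> C * \<eta>" using LB that by blast
    also have "\<dots> \<le> C1 * \<eta>" using that(2) by (simp add: C1_def mult_right_mono)
    finally show ?thesis .
  qed
  define n :: nat where "n = nat \<lceil>2*C1^2\<rceil> + 1"
  have nbig: "real n > 2*C1^2" unfolding n_def by linarith
  have npos: "n > 0" unfolding n_def by simp
  show ?thesis unfolding uniformly_expansive_def
  proof (intro exI[of _ n] conjI allI impI)
    show "n > 0" by (rule npos)
    fix x :: 'a assume x1: "norm x = 1"
    show "2 \<le> norm (iter_int T (int n) x) \<or> 2 \<le> norm (iter_int T (- int n) x)"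
    proof (rule ccontr)
      define N where "N = int n"
      assume "\<not> (2 \<le> norm (iter_int T (int n) x) \<or> 2 \<le> norm (iter_int T (- int n) x))"
      then have a: "norm (iter_int T N x) < 2" and b: "norm (iter_int T (-N) x) < 2"
        unfolding N_def by auto
      define u1 where "u1 = (\<lambda>k. if -N \<le> k \<and> k \<le> N - 1 then iter_int T k x else 0)"
      have u1B: "\<exists>B. \<forall>k. norm (u1 k) \<le> B"
      proof (intro exI allI)
        fix k
        show "norm (u1 k) \<le> (\<Sum>j\<in>{-N..N}. norm (iter_int T j x))"
        proof (cases "-N \<le> k \<and> k \<le> N - 1")
          case True
          then have "k \<in> {-N..N}" by auto
          then have "norm (iter_int T k x) \<le> (\<Sum>j\<in>{-N..N}. norm (iter_int T j x))"
            by (intro member_le_sum) auto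
          then show ?thesis using True unfolding u1_def by simp
        next
          case False
          then have "u1 k = 0" unfolding u1_def by auto
          then show ?thesis by (simp add: sum_nonneg)
        qed
      qed
      have u1L: "\<forall>k. norm (u1 (k+1) - T (u1 k)) \<le> 2"
      proof
        fix k
        consider "-N \<le> k \<and> k \<le> N - 2" | "k = N - 1" | "k = -N - 1" | "k < -N - 1 \<or> k > N - 1"
          by linarith
        then show "norm (u1 (k+1) - T (u1 k)) \<le> 2"
        proof cases
          case 1
          then show ?thesis unfolding u1_def by (simp add: iter_succ)
        next
          case 2
          then have "u1 (k+1) - T (u1 k) = - iter_int T N x"
            unfolding u1_def using npos N_def by (simp add: iter_succ[symmetric])
          then show ?thesis using a by simp
        next
          case 3
          then have "u1 (k+1) - T (u1 k) = iter_int T (-N) x"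
            unfolding u1_def using npos N_def by (simp add: linear_0[OF T_lin])
          then show ?thesis using b by simp
        next
          case 4
          then show ?thesis unfolding u1_def by (auto simp: linear_0[OF T_lin])
        qed
      qed
      have bnd: "norm (iter_int T k x) \<le> 2 * C1" if "-N \<le> k" "k \<le> N" for k
      proof (cases "k = N")
        case True
        then show ?thesis using a C1 by simp
      next
        case False
        then have "u1 k = iter_int T k x" using that unfolding u1_def by simp
        then show ?thesis using LB1[OF u1B _ u1L, of k] by (simp add: mult.commute)
      qed
      define \<phi> where "\<phi> = (\<lambda>k::int. max 0 (1 - \<bar>real_of_int k\<bar> / real n))"
      have \<phi>01: "0 \<le> \<phi> k \<and> \<phi> k \<le> 1" for k
        unfolding \<phi>_def using npos by auto
      have \<phi>0: "\<phi> k = 0" if "\<not> (-N < k \<and> k < N)" for k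
      proof -
        have "\<bar>real_of_int k\<bar> \<ge> real n" using that unfolding N_def by linarith
        then show ?thesis unfolding \<phi>_def using npos by (simp add: field_simps)
      qed
      define u2 where "u2 = (\<lambda>k. \<phi> k *\<^sub>R iter_int T k x)"
      have u2B: "\<exists>B. \<forall>k. norm (u2 k) \<le> B"
      proof (intro exI allI)
        fix k
        show "norm (u2 k) \<le> 2 * C1"
        proof (cases "-N \<le> k \<and> k \<le> N")
          case True
          have "norm (u2 k) = \<phi> k * norm (iter_int T k x)" unfolding u2_def using \<phi>01 by simp
          also have "\<dots> \<le> 1 * (2 * C1)"
            using \<phi>01[of k] bnd[of k] True by (intro mult_mono) auto
          finally show ?thesis by simp
        next
          case False
          then have "\<phi> k = 0" using \<phi>0 by auto
          then show ?thesis unfolding u2_def using C1 by simp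
        qed
      qed
      have u2L: "\<forall>k. norm (u2 (k+1) - T (u2 k)) \<le> 2 * C1 / real n"
      proof
        fix k
        have e: "u2 (k+1) - T (u2 k) = (\<phi> (k+1) - \<phi> k) *\<^sub>R iter_int T (k+1) x"
          unfolding u2_def by (simp add: linear_scale[OF T_lin] iter_succ scaleR_diff_left)
        show "norm (u2 (k+1) - T (u2 k)) \<le> 2 * C1 / real n"
        proof (cases "-N \<le> k+1 \<and> k+1 \<le> N")
          case True
          have l: "\<bar>\<phi> (k+1) - \<phi> k\<bar> \<le> 1 / real n"
            using phi_lip[of "real n" "real_of_int (k+1)" "real_of_int k"] npos
            unfolding \<phi>_def by simp
          have "norm (u2 (k+1) - T (u2 k)) = \<bar>\<phi> (k+1) - \<phi> k\<bar> * norm (iter_int T (k+1) x)"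
            unfolding e by simp
          also have "\<dots> \<le> (1 / real n) * (2 * C1)"
            using l bnd[of "k+1"] True by (intro mult_mono) auto
          finally show ?thesis by simp
        next
          case False
          then have "\<phi> (k+1) = 0" "\<phi> k = 0" using \<phi>0 by auto
          then show ?thesis unfolding e using C1 by simp
        qed
      qed
      have "norm (u2 0) \<le> C1 * (2 * C1 / real n)"
        using LB1[OF u2B _ u2L, of 0] npos C1 by simp
      moreover have "u2 0 = x" unfolding u2_def \<phi>_def by simp
      ultimately have "1 \<le> C1 * (2 * C1 / real n)" using x1 by simp
      then have "real n \<le> 2 * C1^2" using npos by (simp add: field_simps power2_eq_square)
      then show False using nbig by simp
    qed
  qed
qed

end

definition cm :: "complex \<Rightarrow> 'a::real_normed_vector \<times> 'a \<Rightarrow> 'a \<times> 'a" where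
  "cm z p = (Re z *\<^sub>R fst p - Im z *\<^sub>R snd p, Im z *\<^sub>R fst p + Re z *\<^sub>R snd p)"

definition Tp :: "('a \<Rightarrow> 'a) \<Rightarrow> 'a \<times> 'a \<Rightarrow> 'a \<times> 'a" where
  "Tp T p = (T (fst p), T (snd p))"

lemma cs_eq: "complexified_shift T z p = Tp T p - cm z p"
  by (cases p) (simp add: complexified_shift_def cm_def Tp_def)

lemma cm_mult: "cm (z * w) p = cm z (cm w p)"
  by (cases p) (simp add: cm_def algebra_simps scaleR_add_left scaleR_diff_left)

lemma cm_one[simp]: "cm 1 p = p" by (cases p) (simp add: cm_def)
lemma cm_zero[simp]: "cm 0 p = 0" by (cases p) (simp add: cm_def zero_prod_def)
lemma cm_zero_right[simp]: "cm z 0 = 0" by (simp add: cm_def zero_prod_def)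
lemma cm_add_left: "cm (z + w) p = cm z p + cm w p"
  by (cases p) (simp add: cm_def algebra_simps scaleR_add_left)
lemma cm_diff_left: "cm (z - w) p = cm z p - cm w p"
  by (cases p) (simp add: cm_def algebra_simps scaleR_diff_left)
lemma cm_minus_left: "cm (- z) p = - cm z p"
  by (cases p) (simp add: cm_def algebra_simps)
lemma cm_add_right: "cm z (p + q) = cm z p + cm z q"
  by (simp add: cm_def algebra_simps scaleR_add_right)
lemma cm_diff_right: "cm z (p - q) = cm z p - cm z q"
  by (simp add: cm_def algebra_simps scaleR_diff_right)
lemma cm_minus_right: "cm z (- p) = - cm z p"
  by (simp add: cm_def algebra_simps)
lemma cm_scaleR_right: "cm z (r *\<^sub>R p) = r *\<^sub>R cm z p"
  by (simp add: cm_def algebra_simps)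
lemma cm_of_real: "cm (of_real r) p = r *\<^sub>R p"
  by (cases p) (simp add: cm_def)
lemma cm_sum_left: "cm (\<Sum>j\<in>A. f j) p = (\<Sum>j\<in>A. cm (f j) p)"
  by (induction A rule: infinite_finite_induct) (auto simp: cm_add_left)
lemma cm_sum_right: "cm z (\<Sum>j\<in>A. f j) = (\<Sum>j\<in>A. cm z (f j))"
  by (induction A rule: infinite_finite_induct) (auto simp: cm_add_right)

lemma norm_cm: "norm (cm z p) \<le> 4 * cmod z * norm p"
proof -
  obtain a b where p: "p = (a, b)" by (cases p)
  have na: "norm a \<le> norm p" and nb: "norm b \<le> norm p" unfolding p by (simp_all add: norm_fst_le norm_snd_le)
  have re: "\<bar>Re z\<bar> \<le> cmod z" and im: "\<bar>Im z\<bar> \<le> cmod z" by (simp_all add: abs_Re_le_cmod abs_Im_le_cmod)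
  have 1: "norm (Re z *\<^sub>R a - Im z *\<^sub>R b) \<le> 2 * cmod z * norm p"
  proof -
    have "norm (Re z *\<^sub>R a - Im z *\<^sub>R b) \<le> \<bar>Re z\<bar> * norm a + \<bar>Im z\<bar> * norm b"
      using norm_triangle_ineq4[of "Re z *\<^sub>R a" "Im z *\<^sub>R b"] by simp
    also have "\<dots> \<le> cmod z * norm p + cmod z * norm p"
      using re im na nb by (intro add_mono mult_mono) auto
    finally show ?thesis by simp
  qed
  have 2: "norm (Im z *\<^sub>R a + Re z *\<^sub>R b) \<le> 2 * cmod z * norm p"
  proof -
    have "norm (Im z *\<^sub>R a + Re z *\<^sub>R b) \<le> \<bar>Im z\<bar> * norm a + \<bar>Re z\<bar> * norm b"
      using norm_triangle_ineq[of "Im z *\<^sub>R a" "Re z *\<^sub>R b"] by simp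
    also have "\<dots> \<le> cmod z * norm p + cmod z * norm p"
      using re im na nb by (intro add_mono mult_mono) auto
    finally show ?thesis by simp
  qed
  have "norm (cm z p) \<le> norm (Re z *\<^sub>R a - Im z *\<^sub>R b) + norm (Im z *\<^sub>R a + Re z *\<^sub>R b)"
    unfolding cm_def p by (simp add: norm_Pair_le)
  also have "\<dots> \<le> 4 * cmod z * norm p" using 1 2 by simp
  finally show ?thesis .
qed

context autop begin

lemma Tp_cm: "Tp T (cm z p) = cm z (Tp T p)"
  by (simp add: Tp_def cm_def linear_diff[OF T_lin] linear_add[OF T_lin] linear_scale[OF T_lin])
lemma Tp_add: "Tp T (p + q) = Tp T p + Tp T q"
  by (simp add: Tp_def linear_add[OF T_lin])
lemma Tp_diff: "Tp T (p - q) = Tp T p - Tp T q"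
  by (simp add: Tp_def linear_diff[OF T_lin])
lemma Tp_scaleR: "Tp T (r *\<^sub>R p) = r *\<^sub>R Tp T p"
  by (simp add: Tp_def linear_scale[OF T_lin])
lemma Tp_zero[simp]: "Tp T 0 = 0"
  by (simp add: Tp_def linear_0[OF T_lin] zero_prod_def)
lemma Tp_sum: "Tp T (\<Sum>j\<in>A. f j) = (\<Sum>j\<in>A. Tp T (f j))"
  by (induction A rule: infinite_finite_induct) (auto simp: Tp_add)

lemma cs_add: "complexified_shift T z (p + q) = complexified_shift T z p + complexified_shift T z q"
  by (simp add: cs_eq Tp_add cm_add_right)
lemma cs_scaleR: "complexified_shift T z (r *\<^sub>R p) = r *\<^sub>R complexified_shift T z p"
  by (simp add: cs_eq Tp_scaleR cm_scaleR_right scaleR_diff_right)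
lemma cs_diff: "complexified_shift T z (p - q) = complexified_shift T z p - complexified_shift T z q"
  by (simp add: cs_eq Tp_diff cm_diff_right)

end

context autop begin

lemma ub_limit:
  fixes a b C :: real
  assumes C: "C > 0" and H: "\<forall>\<eta>>b. a \<le> C*\<eta>"
  shows "a \<le> C*b"
proof (rule ccontr)
  assume na: "\<not> a \<le> C*b"
  define \<eta> where "\<eta> = b + (a - C*b)/(2*C)"
  have "\<eta> > b" using na C unfolding \<eta>_def by (simp add: field_simps)
  then have "a \<le> C*\<eta>" using H by blast
  moreover have "C*\<eta> = C*b + (a - C*b)/2" using C unfolding \<eta>_def by (simp add: field_simps)
  ultimately have h: "a \<le> C*b + (a - C*b)/2" by simp
  define m where "m = C*b"
  have "a \<le> m + (a - m)/2" "\<not> a \<le> m" using h na unfolding m_def by auto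
  then show False by (simp add: field_simps)
qed

lemma LBp:
  assumes "NB" and Sh: "shadowing_property T"
  shows "\<exists>C>0. \<forall>(X::int \<Rightarrow> 'a\<times>'a) \<eta>. (\<exists>B. \<forall>k. norm (X k) \<le> B) \<longrightarrow> \<eta> > 0 \<longrightarrow>
           (\<forall>k. norm (X (k+1) - Tp T (X k)) \<le> \<eta>) \<longrightarrow> (\<forall>k. norm (X k) \<le> C * \<eta>)"
proof -
  obtain C where C: "C>0" and LB: "\<forall>(u::int\<Rightarrow>'a) \<eta>. (\<exists>B. \<forall>k. norm (u k) \<le> B) \<longrightarrow> \<eta> > 0 \<longrightarrow>
           (\<forall>k. norm (u (k+1) - T (u k)) \<le> \<eta>) \<longrightarrow> (\<forall>k. norm (u k) \<le> C * \<eta>)"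
    using Sh_LB[OF assms] by blast
  have "\<forall>(X::int \<Rightarrow> 'a\<times>'a) \<eta>. (\<exists>B. \<forall>k. norm (X k) \<le> B) \<longrightarrow> \<eta> > 0 \<longrightarrow>
           (\<forall>k. norm (X (k+1) - Tp T (X k)) \<le> \<eta>) \<longrightarrow> (\<forall>k. norm (X k) \<le> (2*C) * \<eta>)"
  proof (intro allI impI)
    fix X :: "int \<Rightarrow> 'a\<times>'a" and \<eta> :: real and k
    assume B: "\<exists>B. \<forall>k. norm (X k) \<le> B" and eta: "\<eta> > 0" and L: "\<forall>k. norm (X (k+1) - Tp T (X k)) \<le> \<eta>"
    from B obtain B where B: "\<forall>k. norm (X k) \<le> B" by auto
    have B1: "\<exists>B. \<forall>k. norm (fst (X k)) \<le> B" using B norm_fst_le order_trans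
      by (metis prod.collapse)
    have B2: "\<exists>B. \<forall>k. norm (snd (X k)) \<le> B" using B norm_snd_le order_trans
      by (metis prod.collapse)
    have L1: "\<forall>k. norm (fst (X (k+1)) - T (fst (X k))) \<le> \<eta>"
    proof
      fix k
      have "fst (X (k+1)) - T (fst (X k)) = fst (X (k+1) - Tp T (X k))" by (simp add: Tp_def)
      then show "norm (fst (X (k+1)) - T (fst (X k))) \<le> \<eta>"
        using L norm_fst_le order_trans by (metis prod.collapse)
    qed
    have L2: "\<forall>k. norm (snd (X (k+1)) - T (snd (X k))) \<le> \<eta>"
    proof
      fix k
      have "snd (X (k+1)) - T (snd (X k)) = snd (X (k+1) - Tp T (X k))" by (simp add: Tp_def)
      then show "norm (snd (X (k+1)) - T (snd (X k))) \<le> \<eta>"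
        using L norm_snd_le order_trans by (metis prod.collapse)
    qed
    have 1: "norm (fst (X k)) \<le> C * \<eta>" using LB[rule_format, of "\<lambda>k. fst (X k)" \<eta> k] B1 eta L1 by blast
    have 2: "norm (snd (X k)) \<le> C * \<eta>" using LB[rule_format, of "\<lambda>k. snd (X k)" \<eta> k] B2 eta L2 by blast
    have "norm (X k) \<le> norm (fst (X k)) + norm (snd (X k))"
      using norm_Pair_le[of "fst (X k)" "snd (X k)"] by simp
    then show "norm (X k) \<le> (2*C) * \<eta>" using 1 2 by simp
  qed
  then show ?thesis using C by (intro exI[of _ "2*C"]) auto
qed

lemma Up:
  fixes X :: "int \<Rightarrow> 'a\<times>'a"
  assumes "NB" and Sh: "shadowing_property T"
    and B: "\<exists>B. \<forall>k. norm (X k) \<le> B" and S: "\<forall>k. X (k+1) = Tp T (X k)"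
  shows "X k = 0"
proof -
  obtain C where C: "C>0" and LB: "\<forall>(X::int \<Rightarrow> 'a\<times>'a) \<eta>. (\<exists>B. \<forall>k. norm (X k) \<le> B) \<longrightarrow> \<eta> > 0 \<longrightarrow>
           (\<forall>k. norm (X (k+1) - Tp T (X k)) \<le> \<eta>) \<longrightarrow> (\<forall>k. norm (X k) \<le> C * \<eta>)"
    using LBp[OF assms(1,2)] by blast
  have "\<forall>\<eta>>0. norm (X k) \<le> C * \<eta>"
  proof (intro allI impI)
    fix \<eta> :: real assume "\<eta> > 0"
    then show "norm (X k) \<le> C * \<eta>" using LB[rule_format, of X \<eta> k] B S by auto
  qed
  then have "norm (X k) \<le> 0" using LB_zero[OF C] by blast
  then show ?thesis by simp
qed

lemma EXp:
  fixes w :: "int \<Rightarrow> 'a\<times>'a"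
  assumes Sh: "shadowing_property T" and W: "\<forall>k. norm (w k) \<le> W"
  shows "\<exists>X. (\<exists>B. \<forall>k. norm (X k) \<le> B) \<and> (\<forall>k. X (k+1) - Tp T (X k) = w k)"
proof -
  have W1: "\<forall>k. norm (fst (w k)) \<le> W" using W norm_fst_le order_trans by (metis prod.collapse)
  have W2: "\<forall>k. norm (snd (w k)) \<le> W" using W norm_snd_le order_trans by (metis prod.collapse)
  obtain u1 B1 where u1: "\<forall>k. norm (u1 k) \<le> B1" "\<forall>k. u1 (k+1) - T (u1 k) = fst (w k)"
    using Sh_EX[OF Sh W1] by blast
  obtain u2 B2 where u2: "\<forall>k. norm (u2 k) \<le> B2" "\<forall>k. u2 (k+1) - T (u2 k) = snd (w k)"
    using Sh_EX[OF Sh W2] by blast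
  show ?thesis
  proof (intro exI[of _ "\<lambda>k. (u1 k, u2 k)"] conjI allI exI[of _ "B1 + B2"])
    fix k
    show "norm (u1 k, u2 k) \<le> B1 + B2" using u1 u2 norm_Pair_le[of "u1 k" "u2 k"]
      by (smt (verit))
    show "(u1 (k+1), u2 (k+1)) - Tp T (u1 k, u2 k) = w k"
      using u1(2) u2(2) by (simp add: Tp_def prod_eq_iff)
  qed
qed

lemma cm_powi_step: "z \<noteq> 0 \<Longrightarrow> cm (z powi (k+1)) p = cm (z powi k) (cm z p)"
  by (simp add: power_int_add_1 cm_mult)

lemma norm_cm_unit: "cmod z = 1 \<Longrightarrow> norm (cm (z powi k) p) \<le> 4 * norm p"
  using norm_cm[of "z powi k" p] by (simp add: norm_power_int)

lemma E_H_point: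
  assumes "NB" and Sh: "shadowing_property T" and z1: "cmod z = 1"
  shows "\<exists>S. bounded_linear S \<and> S \<circ> complexified_shift T z = id \<and> complexified_shift T z \<circ> S = id"
proof -
  let ?A = "complexified_shift T z"
  have z0: "z \<noteq> 0" using z1 by auto
  obtain Cp where Cp: "Cp>0" and LB: "\<forall>(X::int \<Rightarrow> 'a\<times>'a) \<eta>. (\<exists>B. \<forall>k. norm (X k) \<le> B) \<longrightarrow> \<eta> > 0 \<longrightarrow>
           (\<forall>k. norm (X (k+1) - Tp T (X k)) \<le> \<eta>) \<longrightarrow> (\<forall>k. norm (X k) \<le> Cp * \<eta>)"
    using LBp[OF assms(1,2)] by blast
  have inj: "v = 0" if "?A v = 0" for v
  proof -
    have Tv: "Tp T v = cm z v" using that by (simp add: cs_eq)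
    define V where "V = (\<lambda>k. cm (z powi k) v)"
    have "V k = 0" for k
    proof (rule Up[OF assms(1,2)])
      show "\<exists>B. \<forall>k. norm (V k) \<le> B" unfolding V_def using norm_cm_unit[OF z1] by blast
      show "\<forall>k. V (k + 1) = Tp T (V k)"
        unfolding V_def by (simp add: cm_powi_step[OF z0] Tp_cm Tv)
    qed
    from this[of 0] show "v = 0" by (simp add: V_def)
  qed
  have inj2: "v = w" if "?A v = ?A w" for v w
    using inj[of "v - w"] that by (simp add: cs_diff)
  have surj: "\<exists>v. ?A v = f \<and> norm v \<le> Cp * (4 * norm f)" for f
  proof -
    define w where "w = (\<lambda>k. - cm (z powi k) f)"
    have W: "\<forall>k. norm (w k) \<le> 4 * norm f" unfolding w_def using norm_cm_unit[OF z1] by (simp only: norm_minus_cancel) blast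
    obtain X where XB: "\<exists>B. \<forall>k. norm (X k) \<le> B" and XS: "\<forall>k. X (k+1) - Tp T (X k) = w k"
      using EXp[OF Sh W] by blast
    define D where "D = (\<lambda>k. cm (inverse z) (X (k+1)) - X k)"
    have "D k = 0" for k
    proof (rule Up[OF assms(1,2)])
      from XB obtain B where B: "\<forall>k. norm (X k) \<le> B" by auto
      show "\<exists>B. \<forall>k. norm (D k) \<le> B"
      proof (intro exI allI)
        fix k
        have "norm (D k) \<le> norm (cm (inverse z) (X (k+1))) + norm (X k)"
          unfolding D_def by (rule norm_triangle_ineq4)
        also have "\<dots> \<le> 4 * B + B"
        proof -
          have "norm (cm (inverse z) (X (k+1))) \<le> 4 * norm (X (k+1))"
            using norm_cm[of "inverse z" "X (k+1)"] z1 by (simp add: norm_inverse)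
          then show ?thesis using B[rule_format, of k] B[rule_format, of "k+1"] by linarith
        qed
        finally show "norm (D k) \<le> 4 * B + B" .
      qed
      show "\<forall>k. D (k + 1) = Tp T (D k)"
      proof
        fix k
        have e1: "X (k+1+1) = Tp T (X (k+1)) + w (k+1)" using XS[rule_format, of "k+1"] by (metis add.commute diff_add_cancel)
        have e2: "X (k+1) = Tp T (X k) + w k" using XS[rule_format, of k] by (metis add.commute diff_add_cancel)
        have e3: "cm (inverse z) (w (k+1)) = w k"
          unfolding w_def cm_minus_right cm_powi_step[OF z0] cm_mult[symmetric] using z0
          by (simp add: cm_mult[symmetric] mult.commute mult.assoc[symmetric])
        show "D (k + 1) = Tp T (D k)"
          unfolding D_def Tp_diff Tp_cm e1 using e2 e3 by (simp add: cm_add_right algebra_simps)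
      qed
    qed
    have Xs: "X (k+1) = cm z (X k)" for k
    proof -
      have "X k = cm (inverse z) (X (k+1))" using \<open>D k = 0\<close> unfolding D_def by simp
      moreover have "cm z (cm (inverse z) (X (k+1))) = X (k+1)" using z0 by (simp add: cm_mult[symmetric])
      ultimately show ?thesis by simp
    qed
    have Av: "?A (X 0) = f"
      using XS[rule_format, of 0] Xs[of 0] unfolding cs_eq w_def by (simp add: algebra_simps)
    have "\<forall>\<eta>>4 * norm f. norm (X 0) \<le> Cp * \<eta>"
    proof (intro allI impI)
      fix \<eta> assume h: "\<eta> > 4 * norm f"
      then have "\<eta> > 0" using norm_ge_zero[of f] by linarith
      moreover have "\<forall>k. norm (X (k+1) - Tp T (X k)) \<le> \<eta>"
      proof
        fix k show "norm (X (k+1) - Tp T (X k)) \<le> \<eta>" using XS W[rule_format, of k] h by simp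
      qed
      ultimately show "norm (X 0) \<le> Cp * \<eta>" using LB XB by blast
    qed
    then have "norm (X 0) \<le> Cp * (4 * norm f)" using ub_limit[OF Cp] by blast
    then show ?thesis using Av by blast
  qed
  define S where "S = (\<lambda>f. SOME v. ?A v = f)"
  have AS: "?A (S f) = f" for f unfolding S_def using surj[of f] by (metis (mono_tags, lifting) someI)
  have SA: "S (?A v) = v" for v using inj2 AS by blast
  have bl: "bounded_linear S"
  proof (rule bounded_linear_intro[where K = "Cp * 4"])
    fix x y show "S (x + y) = S x + S y" using inj2 AS cs_add by metis
  next
    fix r x show "S (r *\<^sub>R x) = r *\<^sub>R S x" using inj2 AS cs_scaleR by metis
  next
    fix x
    obtain v where v: "?A v = x" "norm v \<le> Cp * (4 * norm x)" using surj by blast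
    have "S x = v" using v(1) SA by blast
    then show "norm (S x) \<le> norm x * (Cp * 4)" using v(2) by (simp add: algebra_simps)
  qed
  show ?thesis
    by (intro exI[of _ S] conjI bl) (auto simp: fun_eq_iff AS SA)
qed

lemma E_H: "NB \<Longrightarrow> shadowing_property T \<Longrightarrow> hyperbolic T"
  unfolding hyperbolic_def spectrum_def using E_H_point by blast

end

definition Xs :: "('a::real_normed_vector \<Rightarrow> 'a) \<Rightarrow> 'a \<Rightarrow> int \<Rightarrow> 'a \<times> 'a" where
  "Xs T x n = (iter_int T n x, 0)"
definition Fp :: "('a::real_normed_vector \<Rightarrow> 'a) \<Rightarrow> 'a \<Rightarrow> complex \<Rightarrow> nat \<Rightarrow> 'a \<times> 'a" where
  "Fp T x l P = (\<Sum>n<P. cm (inverse l ^ Suc n) (Xs T x (int n)))"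
definition Fm :: "('a::real_normed_vector \<Rightarrow> 'a) \<Rightarrow> 'a \<Rightarrow> complex \<Rightarrow> nat \<Rightarrow> 'a \<times> 'a" where
  "Fm T x m P = - (\<Sum>n<P. cm (m ^ n) (Xs T x (- int n - 1)))"

lemma roots_sum:
  fixes y :: complex
  assumes "y ^ N = 1" "N > 0"
  shows "(\<Sum>j<N. y ^ j) = (if y = 1 then of_nat N else 0)"
  using assms by (simp add: sum_gp_strict)

lemma root_pow:
  assumes N: "N > 0"
  shows "exp (2 * of_real pi * \<i> / of_nat N) ^ m = exp (2 * of_real pi * \<i> * of_nat m / of_nat N)"
proof -
  have "exp (2 * of_real pi * \<i> / of_nat N) ^ m = exp (of_nat m * (2 * of_real pi * \<i> / of_nat N))"
    by (rule exp_of_nat_mult[symmetric])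
  then show ?thesis by (simp add: mult_ac)
qed

lemma roots_sum2:
  assumes N: "N > 0"
  defines "w \<equiv> exp (2 * of_real pi * \<i> / of_nat N)"
  shows "(\<Sum>j<N. (w ^ m) ^ j) = (if N dvd m then of_nat N else 0)"
    and "(\<Sum>j<N. (inverse w ^ m) ^ j) = (if N dvd m then of_nat N else 0)"
proof -
  have wN: "w ^ N = 1" unfolding w_def root_pow[OF N] using N by simp
  have e: "w ^ m = 1 \<longleftrightarrow> N dvd m"
    unfolding w_def root_pow[OF N] using complex_root_unity_eq_1[of N m] N by simp
  have p1: "(w ^ m) ^ N = 1" by (metis power_mult mult.commute wN power_one)
  have p2: "(inverse w ^ m) ^ N = 1" by (metis p1 power_inverse inverse_1)
  have e2: "inverse w ^ m = 1 \<longleftrightarrow> N dvd m" using e by (metis power_inverse inverse_1 inverse_inverse_eq)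
  show "(\<Sum>j<N. (w ^ m) ^ j) = (if N dvd m then of_nat N else 0)"
    using roots_sum[OF p1 N] e by simp
  show "(\<Sum>j<N. (inverse w ^ m) ^ j) = (if N dvd m then of_nat N else 0)"
    using roots_sum[OF p2 N] e2 by simp
qed

lemma root_norm:
  assumes N: "N > 0"
  shows "cmod (exp (2 * of_real pi * \<i> / of_nat N) ^ j) = 1"
  by (simp add: norm_power)

lemma geo_filter:
  fixes r :: real
  assumes A: "finite A" "0 \<notin> A" and N: "N > 0" and r: "0 \<le> r" "r < 1"
  shows "(\<Sum>n\<in>A. if N dvd n then r ^ n else 0) \<le> r ^ N / (1 - r ^ N)"
proof -
  define q where "q = r ^ N"
  have q: "0 \<le> q" "q < 1" unfolding q_def using r N by (simp_all add: power_less_one_iff)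
  obtain K where K: "A \<subseteq> {..<K}" using finite_nat_bounded[OF A(1)] by blast
  have "(\<Sum>n\<in>A. if N dvd n then r ^ n else 0) = (\<Sum>n\<in>{n\<in>A. N dvd n}. r ^ n)"
    using sum.inter_filter[OF A(1), of "\<lambda>n. r ^ n" "\<lambda>n. N dvd n"] by simp
  also have "\<dots> \<le> (\<Sum>n\<in>(\<lambda>m. N * m) ` {1..K}. r ^ n)"
  proof (rule sum_mono2)
    show "finite ((\<lambda>m. N * m) ` {1..K})" by simp
    show "{n \<in> A. N dvd n} \<subseteq> (\<lambda>m. N * m) ` {1..K}"
    proof
      fix n assume n: "n \<in> {n \<in> A. N dvd n}"
      then obtain m where m: "n = N * m" by auto
      have "n \<in> A" using n by simp
      then have "n \<noteq> 0" using A(2) by metis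
      then have "m \<ge> 1" using m by (cases m) auto
      moreover have "m \<le> n" using m N by simp
      moreover have "n < K" using n K by auto
      ultimately have "m \<in> {1..K}" by auto
      then show "n \<in> (\<lambda>m. N * m) ` {1..K}" using m by (intro image_eqI[of _ _ m]) auto
    qed
    show "\<And>b. b \<in> (\<lambda>m. N * m) ` {1..K} - {n \<in> A. N dvd n} \<Longrightarrow> 0 \<le> r ^ b" using r by simp
  qed
  also have "\<dots> = (\<Sum>m\<in>{1..K}. q ^ m)"
    using N by (subst sum.reindex) (auto simp: inj_on_def q_def power_mult)
  also have "\<dots> = (\<Sum>m<K. q ^ Suc m)"
  proof -
    have "{1..K} = Suc ` {..<K}" by (simp add: image_Suc_lessThan)
    then show ?thesis by (simp add: sum.reindex)
  qed
  also have "\<dots> = q * (1 - q ^ K) / (1 - q)"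
    using q by (simp add: sum_distrib_left[symmetric] sum_gp_strict)
  also have "\<dots> \<le> q / (1 - q)"
    using q by (intro divide_right_mono) (auto simp: mult_left_le)
  finally show ?thesis unfolding q_def .
qed

context autop begin

lemma Tp_Xs: "Tp T (Xs T x n) = Xs T x (n + 1)"
  by (simp add: Tp_def Xs_def iter_succ linear_0[OF T_lin])

lemma Fp_eq:
  assumes l: "l \<noteq> 0"
  shows "cm l (Fp T x l P) - Tp T (Fp T x l P) = Xs T x 0 - cm (inverse l ^ P) (Xs T x (int P))"
proof (induction P)
  case 0 then show ?case by (simp add: Fp_def)
next
  case (Suc P)
  have a: "cm l (cm (inverse l ^ Suc P) (Xs T x (int P))) = cm (inverse l ^ P) (Xs T x (int P))"
    using l by (simp add: cm_mult[symmetric] mult.assoc[symmetric])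
  have b: "Tp T (cm (inverse l ^ Suc P) (Xs T x (int P))) = cm (inverse l ^ Suc P) (Xs T x (int (Suc P)))"
    by (simp add: Tp_cm Tp_Xs add.commute)
  have "Fp T x l (Suc P) = Fp T x l P + cm (inverse l ^ Suc P) (Xs T x (int P))"
    by (simp add: Fp_def)
  then show ?case using Suc a b by (simp add: cm_add_right Tp_add algebra_simps)
qed

lemma Fm_eq:
  shows "cm m (Fm T x m P) - Tp T (Fm T x m P) = Xs T x 0 - cm (m ^ P) (Xs T x (- int P))"
proof (induction P)
  case 0 then show ?case by (simp add: Fm_def)
next
  case (Suc P)
  have a: "cm m (cm (m ^ P) (Xs T x (- int P - 1))) = cm (m ^ Suc P) (Xs T x (- int P - 1))"
    by (simp add: cm_mult[symmetric])
  have b: "Tp T (cm (m ^ P) (Xs T x (- int P - 1))) = cm (m ^ P) (Xs T x (- int P))"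
    by (simp add: Tp_cm Tp_Xs)
  have c: "- int (Suc P) = - int P - 1" by simp
  have eq: "Fm T x m (Suc P) = Fm T x m P - cm (m ^ P) (Xs T x (- int P - 1))"
    by (simp add: Fm_def)
  have "cm m (Fm T x m (Suc P)) - Tp T (Fm T x m (Suc P)) =
     (cm m (Fm T x m P) - Tp T (Fm T x m P)) - cm m (cm (m ^ P) (Xs T x (- int P - 1))) + Tp T (cm (m ^ P) (Xs T x (- int P - 1)))"
    unfolding eq by (simp add: cm_diff_right Tp_diff algebra_simps)
  then show ?case using Suc a b unfolding c by simp
qed

lemma Fp_cm:
  assumes l: "l \<noteq> 0"
  shows "cm l (Fp T x l P) = (\<Sum>n<P. cm (inverse l ^ n) (Xs T x (int n)))"
  unfolding Fp_def cm_sum_right using l by (simp add: cm_mult[symmetric] mult.assoc[symmetric])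

lemma Fm_cm:
  shows "cm m (Fm T x m P) = - (\<Sum>n<P. cm (m ^ Suc n) (Xs T x (- int n - 1)))"
  unfolding Fm_def cm_minus_right cm_sum_right by (simp add: cm_mult[symmetric])

end

context autop begin

lemma hyp_unif:
  assumes "hyperbolic T"
  shows "\<exists>C>0. \<forall>\<omega> v. cmod \<omega> = 1 \<longrightarrow> norm v \<le> C * norm (complexified_shift T \<omega> v)"
proof -
  have H: "\<exists>K>0. \<forall>v. norm v \<le> K * norm (complexified_shift T \<omega> v)" if "cmod \<omega> = 1" for \<omega>
  proof -
    have "\<omega> \<notin> spectrum T" using assms that unfolding hyperbolic_def by auto
    then obtain S where S: "bounded_linear S" "S \<circ> complexified_shift T \<omega> = id"
      unfolding spectrum_def by auto
    obtain K where K: "K>0" "\<And>x. norm (S x) \<le> norm x * K" using bounded_linear.pos_bounded[OF S(1)] by blast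
    have "norm v \<le> K * norm (complexified_shift T \<omega> v)" for v
    proof -
      have "v = S (complexified_shift T \<omega> v)" using fun_cong[OF S(2), of v] by simp
      then show ?thesis using K(2)[of "complexified_shift T \<omega> v"] by (simp add: mult.commute)
    qed
    then show ?thesis using K(1) by blast
  qed
  define K where "K = (\<lambda>\<omega>. SOME K. K > 0 \<and> (\<forall>v. norm v \<le> K * norm (complexified_shift T \<omega> v)))"
  have Kp: "K \<omega> > 0 \<and> (\<forall>v. norm v \<le> K \<omega> * norm (complexified_shift T \<omega> v))" if "cmod \<omega> = 1" for \<omega>
    using someI_ex[OF H[OF that]] unfolding K_def by blast
  have loc: "norm v \<le> 2 * K \<omega> * norm (complexified_shift T \<omega>' v)"
    if om: "cmod \<omega> = 1" and dd: "dist \<omega> \<omega>' < 1/(8*K \<omega>)" for \<omega> \<omega>' v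
  proof -
    have Kpos: "K \<omega> > 0" and Kb: "norm v \<le> K \<omega> * norm (complexified_shift T \<omega> v)" using Kp[OF om] by blast+
    define c where "c = cmod (\<omega> - \<omega>')"
    define a where "a = norm (complexified_shift T \<omega>' v)"
    define k where "k = K \<omega>"
    have c: "4 * c * k \<le> 1/2" using dd Kpos unfolding c_def k_def dist_norm by (simp add: field_simps)
    have eq: "complexified_shift T \<omega> v = complexified_shift T \<omega>' v - cm (\<omega> - \<omega>') v"
      by (simp add: cs_eq cm_diff_left)
    have "norm (complexified_shift T \<omega> v) \<le> a + 4 * c * norm v"
      unfolding eq a_def c_def using norm_triangle_ineq4[of "complexified_shift T \<omega>' v" "cm (\<omega> - \<omega>') v"]
        norm_cm[of "\<omega> - \<omega>'" v] by linarith
    then have "norm v \<le> k * (a + 4 * c * norm v)" using Kb Kpos unfolding k_def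
      by (meson mult_left_mono less_imp_le order_trans)
    also have "\<dots> = k * a + (4 * c * k) * norm v" by (simp add: algebra_simps)
    also have "\<dots> \<le> k * a + (1/2) * norm v"
      using mult_right_mono[OF c norm_ge_zero[of v]] by linarith
    finally show ?thesis unfolding k_def a_def by simp
  qed
  obtain C' where C': "C' \<subseteq> sphere 0 1" "finite C'" "sphere 0 1 \<subseteq> (\<Union>\<omega>\<in>C'. ball \<omega> (1/(8*K \<omega>)))"
  proof (rule compactE_image[OF compact_sphere[of 0 1], of "sphere 0 1" "\<lambda>\<omega>. ball \<omega> (1/(8*K \<omega>))"])
    show "\<And>\<omega>. \<omega> \<in> sphere 0 1 \<Longrightarrow> open (ball \<omega> (1/(8*K \<omega>)))" by simp
    show "sphere (0::complex) 1 \<subseteq> (\<Union>\<omega>\<in>sphere 0 1. ball \<omega> (1/(8*K \<omega>)))"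
    proof
      fix \<omega> :: complex assume "\<omega> \<in> sphere 0 1"
      then have "K \<omega> > 0" using Kp by auto
      then have "\<omega> \<in> ball \<omega> (1/(8*K \<omega>))" by simp
      then show "\<omega> \<in> (\<Union>\<omega>\<in>sphere 0 1. ball \<omega> (1/(8*K \<omega>)))" using \<open>\<omega> \<in> sphere 0 1\<close> by blast
    qed
  qed blast
  define C where "C = 2 * (\<Sum>\<omega>\<in>C'. K \<omega>) + 1"
  have Kn: "K \<omega> \<ge> 0" if "\<omega> \<in> C'" for \<omega> using Kp[of \<omega>] that C'(1) by force
  have "C > 0" unfolding C_def using Kn by (simp add: sum_nonneg add_nonneg_pos)
  moreover have "norm v \<le> C * norm (complexified_shift T \<omega>' v)" if "cmod \<omega>' = 1" for \<omega>' v
  proof -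
    have "\<omega>' \<in> sphere 0 1" using that by simp
    then obtain \<omega> where om: "\<omega> \<in> C'" "\<omega>' \<in> ball \<omega> (1/(8*K \<omega>))" using C'(3) by blast
    have "norm v \<le> 2 * K \<omega> * norm (complexified_shift T \<omega>' v)"
      using loc[of \<omega> \<omega>' v] om C'(1) by auto
    also have "\<dots> \<le> C * norm (complexified_shift T \<omega>' v)"
    proof (rule mult_right_mono)
      have "K \<omega> \<le> (\<Sum>\<omega>\<in>C'. K \<omega>)" using om(1) C'(2) Kn by (intro member_le_sum) auto
      then show "2 * K \<omega> \<le> C" unfolding C_def by simp
    qed simp
    finally show ?thesis .
  qed
  ultimately show ?thesis by blast
qed

lemma est1:
  assumes C: "\<forall>v. norm v \<le> C * norm (complexified_shift T \<omega> v)" "C > 0"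
    and h: "cmod (l - \<omega>) \<le> h" "4*C*h \<le> 1/2"
    and F: "cm l F - Tp T F = X0 - E"
  shows "norm F \<le> 2*C*(norm X0 + norm E)"
proof -
  have TF: "Tp T F = cm l F - X0 + E" using F by (simp add: algebra_simps)
  have eq: "complexified_shift T \<omega> F = E - X0 + cm (l - \<omega>) F"
    by (simp add: cs_eq cm_diff_left TF algebra_simps)
  have "norm (complexified_shift T \<omega> F) \<le> norm E + norm X0 + 4 * cmod (l - \<omega>) * norm F"
    unfolding eq using norm_triangle_ineq[of "E - X0" "cm (l - \<omega>) F"] norm_triangle_ineq4[of E X0]
      norm_cm[of "l - \<omega>" F] by linarith
  also have "\<dots> \<le> norm E + norm X0 + 4 * h * norm F"
    using h(1) by (simp add: mult_right_mono)
  finally have a: "norm (complexified_shift T \<omega> F) \<le> norm E + norm X0 + 4 * h * norm F" .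
  have "norm F \<le> C * (norm E + norm X0 + 4 * h * norm F)"
    using C(1)[rule_format, of F] a C(2) by (meson mult_left_mono less_imp_le order_trans)
  also have "\<dots> = C * (norm E + norm X0) + (4*C*h) * norm F" by (simp add: algebra_simps)
  also have "\<dots> \<le> C * (norm E + norm X0) + (1/2) * norm F"
    using mult_right_mono[OF h(2) norm_ge_zero[of F]] by linarith
  finally show ?thesis by (simp add: algebra_simps)
qed

lemma est2:
  assumes C: "\<forall>v. norm v \<le> C * norm (complexified_shift T \<omega> v)" "C > 0"
    and h: "cmod (l1 - \<omega>) \<le> h" "cmod (l2 - \<omega>) \<le> h"
    and F1: "cm l1 F1 - Tp T F1 = X0 - E1" and F2: "cm l2 F2 - Tp T F2 = X0 - E2"
  shows "norm (F1 - F2) \<le> C * (norm E1 + norm E2 + 4*h*norm F1 + 4*h*norm F2)"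
proof -
  have TF1: "Tp T F1 = cm l1 F1 - X0 + E1" using F1 by (simp add: algebra_simps)
  have TF2: "Tp T F2 = cm l2 F2 - X0 + E2" using F2 by (simp add: algebra_simps)
  have eq: "complexified_shift T \<omega> (F1 - F2) = (E1 - E2) + (cm (l1 - \<omega>) F1 - cm (l2 - \<omega>) F2)"
    by (simp add: cs_eq cm_diff_left cm_diff_right Tp_diff TF1 TF2 algebra_simps)
  have n1: "norm (cm (l1 - \<omega>) F1) \<le> 4*h*norm F1"
    using norm_cm[of "l1 - \<omega>" F1] h(1) by (smt (verit) mult_right_mono norm_ge_zero mult_left_mono)
  have n2: "norm (cm (l2 - \<omega>) F2) \<le> 4*h*norm F2"
    using norm_cm[of "l2 - \<omega>" F2] h(2) by (smt (verit) mult_right_mono norm_ge_zero mult_left_mono)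
  have "norm (complexified_shift T \<omega> (F1 - F2)) \<le> norm E1 + norm E2 + 4*h*norm F1 + 4*h*norm F2"
    unfolding eq using norm_triangle_ineq[of "E1 - E2" "cm (l1 - \<omega>) F1 - cm (l2 - \<omega>) F2"]
      norm_triangle_ineq4[of E1 E2] norm_triangle_ineq4[of "cm (l1 - \<omega>) F1" "cm (l2 - \<omega>) F2"] n1 n2
    by linarith
  then show ?thesis using C(1)[rule_format, of "F1 - F2"] C(2) by (meson mult_left_mono less_imp_le order_trans)
qed

end

context autop begin

lemma avg_identity:
  fixes \<rho> :: real
  assumes N: "N > 0" and P: "P > 0" and \<rho>: "\<rho> > 0"
  defines "w \<equiv> exp (2 * of_real pi * \<i> / of_nat N)"
  shows "(\<Sum>j<N. cm (of_real \<rho> * w^j) (Fp T x (of_real \<rho> * w^j) P)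
               - cm (of_real (inverse \<rho>) * w^j) (Fm T x (of_real (inverse \<rho>) * w^j) P))
        = real N *\<^sub>R (Xs T x 0 + (\<Sum>n\<in>{1..<P}. (if N dvd n then inverse \<rho> ^ n else 0) *\<^sub>R Xs T x (int n))
                     + (\<Sum>n<P. (if N dvd Suc n then inverse \<rho> ^ Suc n else 0) *\<^sub>R Xs T x (- int n - 1)))"
proof -
  have w0: "w \<noteq> 0" unfolding w_def by simp
  have lam0: "of_real \<rho> * w^j \<noteq> 0" for j using w0 \<rho> by simp
  have s1: "(\<Sum>j<N. inverse (of_real \<rho> * w^j) ^ n) = of_real (real N * (if N dvd n then inverse \<rho> ^ n else 0))" for n
  proof -
    have pj: "inverse (of_real \<rho> * w^j) ^ n = of_real (inverse \<rho> ^ n) * (inverse w ^ n) ^ j" for j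
    proof -
      have "inverse (of_real \<rho> * w^j) ^ n = (inverse (of_real \<rho>) * inverse w ^ j) ^ n"
        by (simp add: inverse_mult_distrib power_inverse)
      also have "\<dots> = inverse (of_real \<rho>) ^ n * (inverse w ^ j) ^ n" by (simp add: power_mult_distrib)
      also have "(inverse w ^ j) ^ n = (inverse w ^ n) ^ j" by (metis power_mult mult.commute)
      finally show ?thesis by (simp add: of_real_inverse)
    qed
    have "(\<Sum>j<N. inverse (of_real \<rho> * w^j) ^ n) = of_real (inverse \<rho> ^ n) * (\<Sum>j<N. (inverse w ^ n) ^ j)"
      by (simp only: pj sum_distrib_left)
    also have "\<dots> = of_real (inverse \<rho> ^ n) * (if N dvd n then of_nat N else 0)"
      using roots_sum2(2)[OF N, of n] unfolding w_def by simp
    finally show ?thesis by simp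
  qed
  have s2: "(\<Sum>j<N. (of_real (inverse \<rho>) * w^j) ^ Suc n) = of_real (real N * (if N dvd Suc n then inverse \<rho> ^ Suc n else 0))" for n
  proof -
    have pj: "(of_real (inverse \<rho>) * w^j) ^ Suc n = of_real (inverse \<rho> ^ Suc n) * (w ^ Suc n) ^ j" for j
    proof -
      have "(of_real (inverse \<rho>) * w^j) ^ Suc n = of_real (inverse \<rho>) ^ Suc n * (w ^ j) ^ Suc n"
        by (simp only: power_mult_distrib)
      also have "(w ^ j) ^ Suc n = (w ^ Suc n) ^ j" by (metis power_mult mult.commute)
      finally show ?thesis by simp
    qed
    have "(\<Sum>j<N. (of_real (inverse \<rho>) * w^j) ^ Suc n) = of_real (inverse \<rho> ^ Suc n) * (\<Sum>j<N. (w ^ Suc n) ^ j)"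
      by (simp only: pj sum_distrib_left)
    also have "\<dots> = of_real (inverse \<rho> ^ Suc n) * (if N dvd Suc n then of_nat N else 0)"
      using roots_sum2(1)[OF N, of "Suc n"] unfolding w_def by simp
    finally show ?thesis by simp
  qed
  define g1 where "g1 = (\<lambda>n. if N dvd n then inverse \<rho> ^ n else 0)"
  define g2 where "g2 = (\<lambda>n. if N dvd Suc n then inverse \<rho> ^ Suc n else 0)"
  have "(\<Sum>j<N. cm (of_real \<rho> * w^j) (Fp T x (of_real \<rho> * w^j) P)
               - cm (of_real (inverse \<rho>) * w^j) (Fm T x (of_real (inverse \<rho>) * w^j) P))
       = (\<Sum>j<N. \<Sum>n<P. cm (inverse (of_real \<rho> * w^j) ^ n) (Xs T x (int n)))
         + (\<Sum>j<N. \<Sum>n<P. cm ((of_real (inverse \<rho>) * w^j) ^ Suc n) (Xs T x (- int n - 1)))"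
    by (simp add: Fp_cm[OF lam0] Fm_cm sum_subtractf sum.distrib)
  also have "\<dots> = (\<Sum>n<P. cm (\<Sum>j<N. inverse (of_real \<rho> * w^j) ^ n) (Xs T x (int n)))
         + (\<Sum>n<P. cm (\<Sum>j<N. (of_real (inverse \<rho>) * w^j) ^ Suc n) (Xs T x (- int n - 1)))"
    by (simp add: cm_sum_left sum.swap[of _ "{..<N}"])
  also have "\<dots> = (\<Sum>n<P. (real N * g1 n) *\<^sub>R Xs T x (int n))
         + (\<Sum>n<P. (real N * g2 n) *\<^sub>R Xs T x (- int n - 1))"
    unfolding s1 s2 cm_of_real g1_def g2_def by simp
  also have "\<dots> = real N *\<^sub>R ((\<Sum>n<P. g1 n *\<^sub>R Xs T x (int n)) + (\<Sum>n<P. g2 n *\<^sub>R Xs T x (- int n - 1)))"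
    by (simp add: scaleR_sum_right scaleR_add_right)
  also have "(\<Sum>n<P. g1 n *\<^sub>R Xs T x (int n)) = Xs T x 0 + (\<Sum>n\<in>{1..<P}. g1 n *\<^sub>R Xs T x (int n))"
  proof -
    have "{..<P} = insert 0 {1..<P}" using P by auto
    then show ?thesis by (simp add: g1_def)
  qed
  finally show ?thesis unfolding g1_def g2_def by (simp add: add.assoc)
qed

end

context autop begin

lemma wsum:
  assumes "\<forall>n\<in>A. 0 \<le> c n" "\<forall>n\<in>A. norm (v n) \<le> M"
  shows "norm (\<Sum>n\<in>A. c n *\<^sub>R v n) \<le> M * (\<Sum>n\<in>A. c n)"
proof -
  have "norm (\<Sum>n\<in>A. c n *\<^sub>R v n) \<le> (\<Sum>n\<in>A. norm (c n *\<^sub>R v n))" by (rule norm_sum)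
  also have "\<dots> \<le> (\<Sum>n\<in>A. c n * M)"
  proof (rule sum_mono)
    fix n assume "n \<in> A"
    then show "norm (c n *\<^sub>R v n) \<le> c n * M" using assms by (simp add: mult_left_mono)
  qed
  also have "\<dots> = M * (\<Sum>n\<in>A. c n)" by (simp add: sum_distrib_left mult.commute)
  finally show ?thesis .
qed

lemma per_j:
  assumes C: "C > 0" and Cw: "\<forall>v. norm v \<le> C * norm (complexified_shift T \<omega> v)"
    and om: "cmod \<omega> = 1"
    and h: "h > 0" "4*C*h \<le> 1/2" "h \<le> 1"
    and \<rho>: "\<rho> = 1 + h" and r: "r = inverse \<rho>"
    and XM: "\<And>n. norm (Xs T x n) \<le> M"
    and e: "e = 4 * r^P * M"
    and B0: "B0 = 2*C*(norm x + 4*M)"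
  shows "norm (cm (of_real \<rho> * \<omega>) (Fp T x (of_real \<rho> * \<omega>) P) - cm (of_real r * \<omega>) (Fm T x (of_real r * \<omega>) P))
           \<le> 16*C*e + (64*C+8)*h*B0"
proof -
  have \<rho>1: "\<rho> > 1" "\<rho> \<le> 1 + h" using \<rho> h by auto
  have rpos: "r > 0" "r < 1" unfolding r using \<rho>1 by (simp_all add: inverse_less_1_iff)
  have omr: "1 - r \<le> h"
  proof -
    have "1 - r = h / (1 + h)" using r \<rho> h by (simp add: field_simps)
    also have "\<dots> \<le> h" using h by (simp add: field_simps)
    finally show ?thesis .
  qed
  have rr: "\<rho> - r \<le> 2*h" using omr \<rho> by simp
  have M0: "M \<ge> 0" using XM[of 0] norm_ge_zero order_trans by metis
  have rP: "0 \<le> r^P" "r^P \<le> 1" using rpos by (simp_all add: power_le_one)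
  have "r^P * M \<le> 1 * M" using rP M0 by (intro mult_right_mono) auto
  then have e0: "0 \<le> e" "e \<le> 4*M" using e rP M0 by simp_all
  define l where "l = of_real \<rho> * \<omega>"
  define m where "m = of_real r * \<omega>"
  have l0: "l \<noteq> 0" using om \<rho>1 by (auto simp: l_def)
  have cl: "cmod l = \<rho>" using om \<rho>1 by (simp add: l_def norm_mult)
  have cm_: "cmod m = r" using om rpos by (simp add: m_def norm_mult)
  have lw: "cmod (l - \<omega>) \<le> h"
  proof -
    have "l - \<omega> = of_real (\<rho> - 1) * \<omega>" by (simp add: l_def algebra_simps)
    then have "cmod (l - \<omega>) = \<bar>\<rho> - 1\<bar> * cmod \<omega>" by (simp only: norm_mult norm_of_real)
    then show ?thesis using om \<rho> h by simp
  qed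
  have mw: "cmod (m - \<omega>) \<le> h"
  proof -
    have "m - \<omega> = of_real (r - 1) * \<omega>" by (simp add: m_def algebra_simps)
    then have "cmod (m - \<omega>) = \<bar>r - 1\<bar> * cmod \<omega>" by (simp only: norm_mult norm_of_real)
    then have "cmod (m - \<omega>) = 1 - r" using om rpos by simp
    then show ?thesis using omr by simp
  qed
  have lm: "cmod (l - m) \<le> 2*h"
  proof -
    have "l - m = of_real (\<rho> - r) * \<omega>" by (simp add: l_def m_def algebra_simps)
    then have "cmod (l - m) = \<bar>\<rho> - r\<bar> * cmod \<omega>" by (simp only: norm_mult norm_of_real)
    then have "cmod (l - m) = \<rho> - r" using om rpos \<rho>1 by simp
    then show ?thesis using rr by simp
  qed
  define Fp' where "Fp' = Fp T x l P"
  define Fm' where "Fm' = Fm T x m P"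
  define Ep where "Ep = cm (inverse l ^ P) (Xs T x (int P))"
  define Em where "Em = cm (m ^ P) (Xs T x (- int P))"
  have eqp: "cm l Fp' - Tp T Fp' = Xs T x 0 - Ep" unfolding Fp'_def Ep_def by (rule Fp_eq[OF l0])
  have eqm: "cm m Fm' - Tp T Fm' = Xs T x 0 - Em" unfolding Fm'_def Em_def by (rule Fm_eq)
  have nEp: "norm Ep \<le> e"
  proof -
    have "cmod (inverse l ^ P) = r ^ P" using cl r by (simp add: norm_power norm_inverse)
    then show ?thesis unfolding Ep_def e using norm_cm[of "inverse l ^ P" "Xs T x (int P)"] XM[of "int P"] rP
      by (smt (verit) mult_left_mono)
  qed
  have nEm: "norm Em \<le> e"
  proof -
    have "cmod (m ^ P) = r ^ P" using cm_ by (simp add: norm_power)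
    then show ?thesis unfolding Em_def e using norm_cm[of "m ^ P" "Xs T x (- int P)"] XM[of "- int P"] rP
      by (smt (verit) mult_left_mono)
  qed
  have X0: "norm (Xs T x 0) = norm x" by (simp add: Xs_def)
  have nFp: "norm Fp' \<le> B0"
  proof -
    have "norm Fp' \<le> 2*C*(norm (Xs T x 0) + norm Ep)" by (rule est1[OF Cw C lw h(2) eqp])
    also have "\<dots> \<le> 2*C*(norm x + 4*M)" using X0 nEp e0 C by (intro mult_left_mono) auto
    finally show ?thesis unfolding B0 .
  qed
  have nFm: "norm Fm' \<le> B0"
  proof -
    have "norm Fm' \<le> 2*C*(norm (Xs T x 0) + norm Em)" by (rule est1[OF Cw C mw h(2) eqm])
    also have "\<dots> \<le> 2*C*(norm x + 4*M)" using X0 nEm e0 C by (intro mult_left_mono) auto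
    finally show ?thesis unfolding B0 .
  qed
  have nD: "norm (Fp' - Fm') \<le> C*(2*e + 8*h*B0)"
  proof -
    have "norm (Fp' - Fm') \<le> C * (norm Ep + norm Em + 4*h*norm Fp' + 4*h*norm Fm')"
      by (rule est2[OF Cw C lw mw eqp eqm])
    also have "\<dots> \<le> C*(2*e + 8*h*B0)"
    proof (rule mult_left_mono)
      have "4*h*norm Fp' \<le> 4*h*B0" using nFp h by simp
      moreover have "4*h*norm Fm' \<le> 4*h*B0" using nFm h by simp
      ultimately show "norm Ep + norm Em + 4*h*norm Fp' + 4*h*norm Fm' \<le> 2*e + 8*h*B0"
        using nEp nEm by linarith
    qed (use C in simp)
    finally show ?thesis .
  qed
  have split: "cm l Fp' - cm m Fm' = cm l (Fp' - Fm') + cm (l - m) Fm'"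
    by (simp add: cm_diff_right cm_diff_left)
  have a: "norm (cm l (Fp' - Fm')) \<le> 8 * (C*(2*e + 8*h*B0))"
  proof -
    have "norm (cm l (Fp' - Fm')) \<le> 4 * cmod l * norm (Fp' - Fm')" by (rule norm_cm)
    also have "\<dots> \<le> 4 * 2 * (C*(2*e + 8*h*B0))"
      using cl \<rho>1 h nD by (intro mult_mono) auto
    finally show ?thesis by simp
  qed
  have b: "norm (cm (l - m) Fm') \<le> 8 * h * B0"
  proof -
    have "norm (cm (l - m) Fm') \<le> 4 * cmod (l - m) * norm Fm'" by (rule norm_cm)
    also have "\<dots> \<le> 4 * (2*h) * B0"
      using lm nFm h by (intro mult_mono) auto
    finally show ?thesis by simp
  qed
  have "norm (cm l Fp' - cm m Fm') \<le> 8 * (C*(2*e + 8*h*B0)) + 8 * h * B0"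
    unfolding split using norm_triangle_ineq[of "cm l (Fp' - Fm')" "cm (l - m) Fm'"] a b by linarith
  also have "\<dots> = 16*C*e + (64*C+8)*h*B0" by (simp add: algebra_simps)
  finally show ?thesis unfolding l_def m_def Fp'_def Fm'_def .
qed

end

lemma aux3: "(a::real) \<noteq> 0 \<Longrightarrow> b \<noteq> 0 \<Longrightarrow> a * (e / (3*(a*b))) * b = e/3"
  by (simp add: field_simps)

lemma aux4: "(C::real) \<noteq> 0 \<Longrightarrow> K \<noteq> 0 \<Longrightarrow> (64*C*M) * (e/(192*C*K)) = (e/3)*(M/K)"
  by (simp add: field_simps)

context autop begin

lemma H_NB:
  assumes hyp: "hyperbolic T"
  shows NB
  unfolding NB_def
proof (intro allI impI)
  fix x assume "\<exists>B. \<forall>n. norm (iter_int T n x) \<le> B"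
  then obtain M where M: "\<forall>n. norm (iter_int T n x) \<le> M" by auto
  have M0: "M \<ge> 0" using M[rule_format, of 0] norm_ge_zero order_trans by metis
  have XM: "norm (Xs T x n) \<le> M" for n using M by (simp add: Xs_def)
  have X0: "norm (Xs T x 0) = norm x" by (simp add: Xs_def)
  obtain C where C: "C > 0" and Cb: "\<forall>\<omega> v. cmod \<omega> = 1 \<longrightarrow> norm v \<le> C * norm (complexified_shift T \<omega> v)"
    using hyp_unif[OF hyp] by blast
  define B0 where "B0 = 2*C*(norm x + 4*M)"
  have B0: "B0 \<ge> 0" using C M0 by (simp add: B0_def)
  have key: "norm x \<le> 0 + \<epsilon>" if \<epsilon>: "\<epsilon> > 0" for \<epsilon>
  proof -
    define h where "h = min (1/(8*C)) (min 1 (\<epsilon> / (3 * ((64*C+8)*(B0+1)))))"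
    have den: "3 * ((64*C+8)*(B0+1)) > 0" using C B0 by (simp add: add_pos_nonneg)
    have h0: "h > 0" using C \<epsilon> den by (simp add: h_def)
    have h1: "h \<le> 1" by (simp add: h_def)
    have h2: "4*C*h \<le> 1/2"
    proof -
      have "h \<le> 1/(8*C)" by (simp add: h_def)
      then have "4*C*h \<le> 4*C*(1/(8*C))" using C by (intro mult_left_mono) auto
      also have "\<dots> = 1/2" using C by simp
      finally show ?thesis .
    qed
    have h3: "(64*C+8)*h*B0 \<le> \<epsilon>/3"
    proof -
      have hh: "h \<le> \<epsilon> / (3 * ((64*C+8)*(B0+1)))" by (simp add: h_def)
      have "(64*C+8)*h*B0 \<le> (64*C+8)*h*(B0+1)" using C h0 by simp
      also have "\<dots> \<le> (64*C+8)*(\<epsilon> / (3 * ((64*C+8)*(B0+1))))*(B0+1)"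
        using hh C B0 by (intro mult_right_mono mult_left_mono) auto
      also have "\<dots> = \<epsilon>/3"
        using aux3[of "64*C+8" "B0+1" \<epsilon>] C B0 by (simp add: add_pos_nonneg)
      finally show ?thesis .
    qed
    define \<rho> where "\<rho> = 1 + h"
    define r where "r = inverse \<rho>"
    have \<rho>1: "\<rho> > 1" using h0 by (simp add: \<rho>_def)
    have rpos: "r > 0" "r < 1" unfolding r_def using \<rho>1 by (simp_all add: inverse_less_1_iff)
    have tq: "min (1/2) (\<epsilon> / (12*(M+1))) > 0" using \<epsilon> M0 by simp
    obtain N0 where N0: "r ^ N0 < min (1/2) (\<epsilon> / (12*(M+1)))"
      using real_arch_pow_inv[OF tq rpos(2)] by blast
    define N where "N = Suc N0"
    have N: "N > 0" by (simp add: N_def)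
    define q where "q = r ^ N"
    have qN0: "q \<le> r ^ N0" unfolding q_def N_def using rpos by (simp add: mult_left_le_one_le)
    have q0: "0 \<le> q" unfolding q_def using rpos by simp
    have q1: "q \<le> 1/2" using qN0 N0 by simp
    have q2: "4*M*q \<le> \<epsilon>/3"
    proof -
      have "q \<le> \<epsilon> / (12*(M+1))" using qN0 N0 by simp
      then have "4*M*q \<le> 4*M*(\<epsilon> / (12*(M+1)))" using M0 by (intro mult_left_mono) auto
      also have "\<dots> \<le> \<epsilon>/3"
      proof -
        have "4*M*(\<epsilon> / (12*(M+1))) = (\<epsilon>/3) * (M/(M+1))" using M0 by (simp add: field_simps)
        also have "\<dots> \<le> (\<epsilon>/3) * 1" using M0 \<epsilon> by (intro mult_left_mono) auto
        finally show ?thesis by simp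
      qed
      finally show ?thesis .
    qed
    have tp: "\<epsilon> / (192*C*(M+1)) > 0" using \<epsilon> C M0 by simp
    obtain P0 where P0: "r ^ P0 < \<epsilon> / (192*C*(M+1))" using real_arch_pow_inv[OF tp rpos(2)] by blast
    define P where "P = Suc P0"
    have P: "P > 0" by (simp add: P_def)
    have rP: "r ^ P \<le> r ^ P0" unfolding P_def using rpos by (simp add: mult_left_le_one_le)
    define e where "e = 4 * r^P * M"
    have e2: "16*C*e \<le> \<epsilon>/3"
    proof -
      have "16*C*e = (64*C*M) * r^P" by (simp add: e_def)
      also have "\<dots> \<le> (64*C*M) * (\<epsilon> / (192*C*(M+1)))"
        using rP P0 C M0 by (intro mult_left_mono) auto
      also have "\<dots> = (\<epsilon>/3) * (M/(M+1))" by (rule aux4) (use C M0 in auto)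
      also have "\<dots> \<le> (\<epsilon>/3) * 1" using M0 \<epsilon> by (intro mult_left_mono) auto
      finally show ?thesis by simp
    qed
    define w where "w = exp (2 * of_real pi * \<i> / of_nat N)"
    define Db where "Db = 16*C*e + (64*C+8)*h*B0"
    define D where "D = (\<lambda>j. cm (of_real \<rho> * w^j) (Fp T x (of_real \<rho> * w^j) P)
               - cm (of_real (inverse \<rho>) * w^j) (Fm T x (of_real (inverse \<rho>) * w^j) P))"
    have Dj: "norm (D j) \<le> Db" for j
    proof -
      have om: "cmod (w^j) = 1" by (simp add: w_def norm_power)
      have Cw: "\<forall>v. norm v \<le> C * norm (complexified_shift T (w^j) v)" using Cb om by blast
      show ?thesis unfolding D_def Db_def
        using per_j[OF C Cw om h0 h2 h1 \<rho>_def r_def XM e_def B0_def] unfolding r_def .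
    qed
    define g1 where "g1 = (\<lambda>n. if N dvd n then inverse \<rho> ^ n else 0)"
    define E' where "E' = (\<Sum>n\<in>{1..<P}. g1 n *\<^sub>R Xs T x (int n))
                     + (\<Sum>n<P. (if N dvd Suc n then inverse \<rho> ^ Suc n else 0) *\<^sub>R Xs T x (- int n - 1))"
    have avg: "(\<Sum>j<N. D j) = real N *\<^sub>R (Xs T x 0 + E')"
      unfolding D_def E'_def g1_def w_def using avg_identity[OF N P] \<rho>1 by (simp add: add.assoc)
    have g1n: "0 \<le> g1 n" for n using rpos unfolding g1_def r_def by simp
    have geo: "(\<Sum>n\<in>A. g1 n) \<le> q / (1 - q)" if "finite A" "0 \<notin> A" for A
      using geo_filter[OF that N, of r] rpos unfolding g1_def q_def r_def by simp
    have qq: "q / (1 - q) \<le> 2 * q"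
    proof -
      have pos: "1 - q > 0" using q1 by simp
      have "0 \<le> q * (1 - 2*q)" using q0 q1 by simp
      then have "q \<le> 2*q*(1-q)" by (simp add: algebra_simps)
      then show ?thesis using pos by (simp add: pos_divide_le_eq)
    qed
    have nE1: "norm (\<Sum>n\<in>{1..<P}. g1 n *\<^sub>R Xs T x (int n)) \<le> M * (2*q)"
    proof -
      have "norm (\<Sum>n\<in>{1..<P}. g1 n *\<^sub>R Xs T x (int n)) \<le> M * (\<Sum>n\<in>{1..<P}. g1 n)"
        using g1n XM by (intro wsum) auto
      also have "\<dots> \<le> M * (2*q)" using geo[of "{1..<P}"] qq M0 by (intro mult_left_mono) auto
      finally show ?thesis .
    qed
    have nE2: "norm (\<Sum>n<P. (if N dvd Suc n then inverse \<rho> ^ Suc n else 0) *\<^sub>R Xs T x (- int n - 1)) \<le> M * (2*q)"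
    proof -
      have "norm (\<Sum>n<P. (if N dvd Suc n then inverse \<rho> ^ Suc n else 0) *\<^sub>R Xs T x (- int n - 1))
            = norm (\<Sum>n<P. g1 (Suc n) *\<^sub>R Xs T x (- int n - 1))" by (simp add: g1_def)
      also have "\<dots> \<le> M * (\<Sum>n<P. g1 (Suc n))"
        using g1n XM by (intro wsum) auto
      also have "(\<Sum>n<P. g1 (Suc n)) = (\<Sum>n\<in>Suc ` {..<P}. g1 n)"
        by (simp add: sum.reindex)
      also have "M * \<dots> \<le> M * (2*q)" using geo[of "Suc ` {..<P}"] qq M0 by (intro mult_left_mono) auto
      finally show ?thesis .
    qed
    have nE: "norm E' \<le> 4*M*q" unfolding E'_def
      using norm_triangle_ineq[of "\<Sum>n\<in>{1..<P}. g1 n *\<^sub>R Xs T x (int n)"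
          "\<Sum>n<P. (if N dvd Suc n then inverse \<rho> ^ Suc n else 0) *\<^sub>R Xs T x (- int n - 1)"] nE1 nE2
      by linarith
    have "real N * norm (Xs T x 0 + E') = norm (\<Sum>j<N. D j)" unfolding avg by simp
    also have "\<dots> \<le> (\<Sum>j<N. norm (D j))" by (rule norm_sum)
    also have "\<dots> \<le> real N * Db" using Dj sum_bounded_above[of "{..<N}" "\<lambda>j. norm (D j)" Db] by simp
    finally have "real N * norm (Xs T x 0 + E') \<le> real N * Db" .
    then have nXE: "norm (Xs T x 0 + E') \<le> Db" using N by simp
    have "norm x \<le> norm (Xs T x 0 + E') + norm E'"
      using X0 norm_triangle_ineq4[of "Xs T x 0 + E'" E'] by simp
    also have "\<dots> \<le> Db + 4*M*q" using nXE nE by linarith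
    also have "\<dots> \<le> \<epsilon>/3 + \<epsilon>/3 + \<epsilon>/3" unfolding Db_def using e2 h3 q2 by linarith
    finally show ?thesis by simp
  qed
  have "norm x \<le> 0" by (rule field_le_epsilon) (rule key)
  then show "x = 0" by simp
qed

end

theorem mainTheorem15:
  fixes T :: "'a::banach \<Rightarrow> 'a"
  assumes "T \<in> L_aut"
    and "shadowing_property T"
  shows "(uniformly_expansive T \<longleftrightarrow> expansive T)
       \<and> (expansive T \<longleftrightarrow> unique_shadowing_property T)
       \<and> (unique_shadowing_property T \<longleftrightarrow> hyperbolic T)"
proof -
  interpret autop T by unfold_locales (rule assms(1))
  have UE_E: "uniformly_expansive T \<longleftrightarrow> expansive T"
    using UE_imp_NB NB_Sh_UE assms(2) exp_NB by blast
  have E_US: "expansive T \<longleftrightarrow> unique_shadowing_property T"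
    using E_imp_US US_imp_E assms(2) by blast
  have US_H: "unique_shadowing_property T \<longleftrightarrow> hyperbolic T"
    using E_US exp_NB E_H H_NB assms(2) by blast
  show ?thesis using UE_E E_US US_H by blast
qed

end
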